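(* Under the assumptions of the preceding lemma ($k,l\ge0$, $k+l\le d$, $X_1,\dots,X_k$ independent standard Gaussian in $\mathbb{R}^d$, $Y_1,\dots,Y_l$ arbitrary random vectors in $\mathbb{R}^d$ independent of the $X$'s), for every $p>0$, $$\mathbb E|\mathrm{conv}(0,X_1,\dots,X_k,Y_1,\dots,Y_l)|^p=\Bigg[\frac{2^{k/2}\,l!}{(k+l)!}\Bigg]^p\prod_{i=d-l-k+1}^{d-l}\frac{\Gamma(\frac{i+p}2)}{\Gamma(\frac i2)}\;\mathbb E|\mathrm{conv}(0,Y_1,\dots,Y_l)|^p.$$
   Context: $|\mathrm{conv}(0,Z_1,\dots,Z_j)|$ denotes the $j$-dimensional volume of the simplex with vertices $0,Z_1,\dots,Z_j$ (with value $1$ when $j=0$). *)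

theory Defs
  imports "HOL-Probability.Probability"
begin

definition std_gaussian_density :: "real ^ 'd \<Rightarrow> real" where
  "std_gaussian_density x = (\<Prod>j\<in>UNIV. std_normal_density (x $ j))"

definition gram_det :: "nat \<Rightarrow> (nat \<Rightarrow> real ^ 'd) \<Rightarrow> real" where
  "gram_det j Z = (\<Sum>p | p permutes {..<j}. of_int (sign p) * (\<Prod>a<j. inner (Z a) (Z (p a))))"

text \<open>j-dimensional volume of the simplex conv(0, Z 0, ..., Z (j-1)); equals 1 for j = 0.\<close>
definition simplex_vol :: "nat \<Rightarrow> (nat \<Rightarrow> real ^ 'd) \<Rightarrow> real" where
  "simplex_vol j Z = sqrt (gram_det j Z) / fact j"

end

theory Submission
  imports Defs "Jordan_Normal_Form.Determinant"
begin

no_notation Matrix.scalar_prod (infix "\<bullet>" 70)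
hide_const (open) Determinant.det Matrix.mat Matrix.row Matrix.orthogonal




definition vcons :: "'a \<Rightarrow> (nat \<Rightarrow> 'a) \<Rightarrow> nat \<Rightarrow> 'a" where
  "vcons t y = (\<lambda>a. if a = 0 then t else y (a - 1))"

definition GM :: "nat \<Rightarrow> (nat \<Rightarrow> real ^ 'd) \<Rightarrow> real Matrix.mat" where
  "GM j Z = Matrix.mat j j (\<lambda>(a,b). Z a \<bullet> Z b)"

lemma GM_carrier: "GM j Z \<in> carrier_mat j j"
  by (simp add: GM_def)

lemma gram_det_GM: "gram_det j Z = Determinant.det (GM j Z)"
proof -
  have "Determinant.det (GM j Z) = (\<Sum>p | p permutes {0..<j}. of_int (sign p) * (\<Prod>i = 0..<j. GM j Z $$ (i, p i)))"
    by (simp add: Determinant.det_def GM_def)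
  also have "\<dots> = (\<Sum>p | p permutes {..<j}. of_int (sign p) * (\<Prod>a<j. Z a \<bullet> Z (p a)))"
  proof (rule sum.cong)
    show "{p. p permutes {0..<j}} = {p. p permutes {..<j}}" by (simp add: atLeast0LessThan)
  next
    fix p assume "p \<in> {p. p permutes {..<j}}"
    then have p: "p permutes {..<j}" by simp
    have "(\<Prod>i = 0..<j. GM j Z $$ (i, p i)) = (\<Prod>a<j. Z a \<bullet> Z (p a))"
      unfolding atLeast0LessThan
    proof (rule prod.cong)
      fix x assume "x \<in> {..<j}"
      then have "p x < j" using permutes_in_image[OF p] by auto
      then show "GM j Z $$ (x, p x) = Z x \<bullet> Z (p x)" using \<open>x \<in> {..<j}\<close> by (simp add: GM_def)
    qed simp
    then show "of_int (sign p) * (\<Prod>i = 0..<j. GM j Z $$ (i, p i)) = of_int (sign p) * (\<Prod>a<j. Z a \<bullet> Z (p a))"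
      by simp
  qed
  finally show ?thesis by (simp add: gram_det_def)
qed

lemma gram_det_cong:
  assumes "\<And>a. a < j \<Longrightarrow> Z a = Z' a"
  shows "gram_det j Z = gram_det j Z'"
  unfolding gram_det_GM GM_def using assms
  by (intro arg_cong[where f = Determinant.det] eq_matI) auto

lemma gram_det_0 [simp]: "gram_det 0 Z = 1"
  unfolding gram_det_def by simp

lemma gram_add_one:
  assumes "i < l"
  shows "gram_det (Suc l) (vcons (t + c *\<^sub>R y i) y) = gram_det (Suc l) (vcons t y)"
proof -
  let ?A = "GM (Suc l) (vcons t y)"
  have eq: "GM (Suc l) (vcons (t + c *\<^sub>R y i) y) = addcol c 0 (Suc i) (addrow c 0 (Suc i) ?A)"
    using assms
    by (intro eq_matI)
       (auto simp: GM_def vcons_def index_mat_addrow inner_add_left inner_add_right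
         inner_commute algebra_simps)
  have c1: "addrow c 0 (Suc i) ?A \<in> carrier_mat (Suc l) (Suc l)"
    by (simp add: GM_def mat_addrow_def)
  have "Determinant.det (addcol c 0 (Suc i) (addrow c 0 (Suc i) ?A)) = Determinant.det (addrow c 0 (Suc i) ?A)"
    by (rule det_addcol[OF _ _ c1]) (use assms in auto)
  also have "\<dots> = Determinant.det ?A"
    by (rule det_addrow[OF _ _ GM_carrier]) (use assms in auto)
  finally show ?thesis
    unfolding gram_det_GM eq .
qed

lemma gram_add_span:
  assumes "v \<in> span (y ` {..<l})"
  shows "gram_det (Suc l) (vcons (t + v) y) = gram_det (Suc l) (vcons t y)"
  using assms
proof (induction v arbitrary: t rule: span_induct_alt)
  case base
  then show ?case by simp
next
  case (step c x v)
  then obtain i where i: "i < l" "x = y i" by auto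
  have "gram_det (Suc l) (vcons (t + (c *\<^sub>R x + v)) y) = gram_det (Suc l) (vcons ((t + v) + c *\<^sub>R y i) y)"
    by (simp add: i algebra_simps)
  also have "\<dots> = gram_det (Suc l) (vcons (t + v) y)" by (rule gram_add_one[OF i(1)])
  also have "\<dots> = gram_det (Suc l) (vcons t y)" by (rule step.IH)
  finally show ?case .
qed

lemma gram_orth:
  assumes "\<And>i. i < l \<Longrightarrow> w \<bullet> y i = 0"
  shows "gram_det (Suc l) (vcons w y) = (w \<bullet> w) * gram_det l y"
proof -
  have eq: "GM (Suc l) (vcons w y) = four_block_mat (Matrix.mat 1 1 (\<lambda>_. w \<bullet> w))
      (Matrix.mat 1 l (\<lambda>(a,b). w \<bullet> y b)) (0\<^sub>m l 1) (GM l y)"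
    using assms
    by (intro eq_matI) (auto simp: GM_def vcons_def four_block_mat_def inner_commute)
  show ?thesis
    unfolding gram_det_GM eq
    by (subst det_four_block_mat_lower_left_zero_col) (auto simp: GM_carrier Determinant.det_def)
qed

lemma orth_span:
  assumes "\<And>i. i < l \<Longrightarrow> w \<bullet> y i = 0" and "v \<in> span (y ` {..<l})"
  shows "w \<bullet> v = 0"
  using orthogonal_to_span[OF assms(2), of w] assms(1) by (auto simp: real_inner_class.orthogonal_def)

lemma orth_decomp:
  fixes t :: "real ^ 'd"
  obtains w where "t - w \<in> span (y ` {..<l})" "\<And>i. i < l \<Longrightarrow> w \<bullet> y i = 0"
proof -
  let ?U = "span (y ` {..<l})"
  have "t \<in> ?U + ?U\<^sup>\<bottom>" using subspace_sum_orthogonal_comp[of ?U] by auto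
  then obtain v w where vw: "v \<in> ?U" "w \<in> ?U\<^sup>\<bottom>" "t = v + w"
    by (auto simp: set_plus_def)
  show ?thesis
  proof (rule that[of w])
    show "t - w \<in> ?U" using vw by simp
    fix i assume "i < l"
    then have "y i \<in> ?U" by (auto intro: span_base)
    then show "w \<bullet> y i = 0" using vw(2) by (auto simp: orthogonal_comp_def real_inner_class.orthogonal_def inner_commute)
  qed
qed

lemma gram_rec:
  assumes "t - w \<in> span (y ` {..<l})" "\<And>i. i < l \<Longrightarrow> w \<bullet> y i = 0"
  shows "gram_det (Suc l) (vcons t y) = (w \<bullet> w) * gram_det l y"
proof -
  have "gram_det (Suc l) (vcons t y) = gram_det (Suc l) (vcons (w + (t - w)) y)" by simp
  also have "\<dots> = gram_det (Suc l) (vcons w y)" by (rule gram_add_span[OF assms(1)])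
  also have "\<dots> = (w \<bullet> w) * gram_det l y" by (rule gram_orth[OF assms(2)])
  finally show ?thesis .
qed

lemma gram_vcons_split: "gram_det (Suc l) Z = gram_det (Suc l) (vcons (Z 0) (\<lambda>a. Z (Suc a)))"
  by (rule gram_det_cong) (auto simp: vcons_def)

lemma gram_nonneg: "gram_det l Z \<ge> 0"
proof (induction l arbitrary: Z)
  case 0
  then show ?case by simp
next
  case (Suc l)
  obtain w where w: "Z 0 - w \<in> span ((\<lambda>a. Z (Suc a)) ` {..<l})" "\<And>i. i < l \<Longrightarrow> w \<bullet> Z (Suc i) = 0"
    using orth_decomp by blast
  have "gram_det (Suc l) Z = (w \<bullet> w) * gram_det l (\<lambda>a. Z (Suc a))"
    by (subst gram_vcons_split) (rule gram_rec[OF w(1) w(2)])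
  then show ?case using Suc.IH[of "\<lambda>a. Z (Suc a)"] by simp
qed

lemma gram_pos_dim: "gram_det l Z > 0 \<Longrightarrow> dim (Z ` {..<l}) = l"
proof (induction l arbitrary: Z)
  case 0
  then show ?case by simp
next
  case (Suc l)
  let ?T = "(\<lambda>a. Z (Suc a)) ` {..<l}"
  obtain w where w: "Z 0 - w \<in> span ?T" "\<And>i. i < l \<Longrightarrow> w \<bullet> Z (Suc i) = 0"
    using orth_decomp by blast
  have G: "gram_det (Suc l) Z = (w \<bullet> w) * gram_det l (\<lambda>a. Z (Suc a))"
    by (subst gram_vcons_split) (rule gram_rec[OF w(1) w(2)])
  have ww: "w \<bullet> w \<ge> 0" by simp
  have gl: "gram_det l (\<lambda>a. Z (Suc a)) \<ge> 0" by (rule gram_nonneg)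
  have pos: "gram_det l (\<lambda>a. Z (Suc a)) > 0" and wpos: "w \<bullet> w > 0"
    using Suc.prems G ww gl by (auto simp: zero_less_mult_iff)
  have notin: "Z 0 \<notin> span ?T"
  proof
    assume "Z 0 \<in> span ?T"
    then have "Z 0 - (Z 0 - w) \<in> span ?T" using w(1) by (rule span_diff)
    then have "w \<in> span ?T" by simp
    then have "w \<bullet> w = 0" using orth_span[of l w "\<lambda>a. Z (Suc a)"] w(2) by blast
    with wpos show False by simp
  qed
  have "Z ` {..<Suc l} = insert (Z 0) ?T"
    by (auto simp: lessThan_Suc_eq_insert_0 image_image)
  then show ?case
    using notin Suc.IH[OF pos] by (simp add: dim_insert)
qed


definition Cb :: "real \<Rightarrow> ennreal" where
  "Cb a = (\<integral>\<^sup>+t. ennreal (indicator {-1<..<1} t * (1 - t^2) powr (a - 1)) \<partial>lborel)"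

lemma inner_scale:
  fixes u a :: real
  assumes u: "u > 0"
  shows "(\<integral>\<^sup>+y. ennreal (indicator {0<..} (u - y^2) * (u - y^2) powr (a - 1)) \<partial>lborel)
       = Cb a * ennreal (u powr (a - 1/2))"
proof -
  have su: "sqrt u > 0" using u by simp
  have "(\<integral>\<^sup>+y. ennreal (indicator {0<..} (u - y^2) * (u - y^2) powr (a - 1)) \<partial>lborel)
     = ennreal \<bar>sqrt u\<bar> * (\<integral>\<^sup>+x. ennreal (indicator {0<..} (u - (0 + sqrt u * x)^2) * (u - (0 + sqrt u * x)^2) powr (a - 1)) \<partial>lborel)"
    by (rule nn_integral_real_affine; use su in auto)
  also have "(\<integral>\<^sup>+x. ennreal (indicator {0<..} (u - (0 + sqrt u * x)^2) * (u - (0 + sqrt u * x)^2) powr (a - 1)) \<partial>lborel)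
     = (\<integral>\<^sup>+x. ennreal (u powr (a - 1)) * ennreal (indicator {-1<..<1} x * (1 - x^2) powr (a - 1)) \<partial>lborel)"
  proof (rule nn_integral_cong)
    fix x :: real
    have e1: "u - (0 + sqrt u * x)^2 = u * (1 - x^2)"
      using u by (simp add: power_mult_distrib algebra_simps)
    have e2: "(0 < u * (1 - x^2)) = (x \<in> {-1<..<1})"
      using u by (auto simp: zero_less_mult_iff abs_square_less_1 abs_less_iff)
    have e3: "(u * (1 - x^2)) powr (a - 1) = u powr (a - 1) * (1 - x^2) powr (a - 1)" if "x \<in> {-1<..<1}"
      using u that by (intro powr_mult; auto simp: abs_square_less_1 abs_less_iff)
    show "ennreal (indicator {0<..} (u - (0 + sqrt u * x)^2) * (u - (0 + sqrt u * x)^2) powr (a - 1))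
       = ennreal (u powr (a - 1)) * ennreal (indicator {-1<..<1} x * (1 - x^2) powr (a - 1))"
      unfolding e1 using e2 e3
      by (cases "x \<in> {-1<..<1}") (auto simp: indicator_def ennreal_mult'[symmetric])
  qed
  also have "\<dots> = ennreal (u powr (a - 1)) * Cb a"
    unfolding Cb_def by (rule nn_integral_cmult) measurable
  finally have "(\<integral>\<^sup>+y. ennreal (indicator {0<..} (u - y^2) * (u - y^2) powr (a - 1)) \<partial>lborel)
     = ennreal (sqrt u) * ennreal (u powr (a - 1)) * Cb a"
    using su by (simp add: mult.assoc)
  also have "ennreal (sqrt u) * ennreal (u powr (a - 1)) = ennreal (u powr (a - 1/2))"
  proof -
    have "sqrt u * u powr (a - 1) = u powr (a - 1/2)"
      using u by (simp add: powr_half_sqrt[symmetric] powr_add[symmetric])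
    then show ?thesis using su by (simp add: ennreal_mult'[symmetric])
  qed
  finally show ?thesis by (simp add: mult.commute)
qed

lemma S2:
  fixes g :: "real \<Rightarrow> ennreal" and a :: real
  assumes g[measurable]: "g \<in> borel_measurable borel"
  shows "(\<integral>\<^sup>+s. (\<integral>\<^sup>+y. g (y^2 + s) \<partial>lborel) * ennreal (indicator {0<..} s * s powr (a - 1)) \<partial>lborel)
       = Cb a * (\<integral>\<^sup>+u. g u * ennreal (indicator {0<..} u * u powr (a - 1/2)) \<partial>lborel)"
proof -
  have "(\<integral>\<^sup>+s. (\<integral>\<^sup>+y. g (y^2 + s) \<partial>lborel) * ennreal (indicator {0<..} s * s powr (a - 1)) \<partial>lborel)
      = (\<integral>\<^sup>+s. (\<integral>\<^sup>+y. g (y^2 + s) * ennreal (indicator {0<..} s * s powr (a - 1)) \<partial>lborel) \<partial>lborel)"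
    by (intro nn_integral_cong nn_integral_multc[symmetric]) measurable
  also have "\<dots> = (\<integral>\<^sup>+y. (\<integral>\<^sup>+s. g (y^2 + s) * ennreal (indicator {0<..} s * s powr (a - 1)) \<partial>lborel) \<partial>lborel)"
    by (rule lborel_pair.Fubini') measurable
  also have "\<dots> = (\<integral>\<^sup>+y. (\<integral>\<^sup>+u. g u * ennreal (indicator {0<..} (u - y^2) * (u - y^2) powr (a - 1)) \<partial>lborel) \<partial>lborel)"
  proof (rule nn_integral_cong)
    fix y :: real
    have "(\<integral>\<^sup>+u. g u * ennreal (indicator {0<..} (u - y^2) * (u - y^2) powr (a - 1)) \<partial>lborel)
        = (\<integral>\<^sup>+u. g u * ennreal (indicator {0<..} (u - y^2) * (u - y^2) powr (a - 1)) \<partial>distr lborel borel ((+) (y^2)))"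
      by (simp add: lborel_distr_plus)
    also have "\<dots> = (\<integral>\<^sup>+s. g (y^2 + s) * ennreal (indicator {0<..} s * s powr (a - 1)) \<partial>lborel)"
      by (subst nn_integral_distr) auto
    finally show "(\<integral>\<^sup>+s. g (y^2 + s) * ennreal (indicator {0<..} s * s powr (a - 1)) \<partial>lborel)
        = (\<integral>\<^sup>+u. g u * ennreal (indicator {0<..} (u - y^2) * (u - y^2) powr (a - 1)) \<partial>lborel)" ..
  qed
  also have "\<dots> = (\<integral>\<^sup>+u. (\<integral>\<^sup>+y. g u * ennreal (indicator {0<..} (u - y^2) * (u - y^2) powr (a - 1)) \<partial>lborel) \<partial>lborel)"
    by (rule lborel_pair.Fubini') measurable
  also have "\<dots> = (\<integral>\<^sup>+u. g u * (\<integral>\<^sup>+y. ennreal (indicator {0<..} (u - y^2) * (u - y^2) powr (a - 1)) \<partial>lborel) \<partial>lborel)"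
    by (intro nn_integral_cong nn_integral_cmult) measurable
  also have "\<dots> = (\<integral>\<^sup>+u. Cb a * (g u * ennreal (indicator {0<..} u * u powr (a - 1/2))) \<partial>lborel)"
  proof (rule nn_integral_cong)
    fix u :: real
    show "g u * (\<integral>\<^sup>+y. ennreal (indicator {0<..} (u - y^2) * (u - y^2) powr (a - 1)) \<partial>lborel)
        = Cb a * (g u * ennreal (indicator {0<..} u * u powr (a - 1/2)))"
    proof (cases "u > 0")
      case True
      then show ?thesis by (simp add: inner_scale mult_ac)
    next
      case False
      have "indicator {0<..} (u - y^2) = (0::real)" for y
        using False by (auto simp: indicator_def) (smt (verit) zero_le_power2)
      then show ?thesis using False by (simp add: indicator_def)
    qed
  qed
  also have "\<dots> = Cb a * (\<integral>\<^sup>+u. g u * ennreal (indicator {0<..} u * u powr (a - 1/2)) \<partial>lborel)"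
    by (rule nn_integral_cmult) measurable
  finally show ?thesis .
qed

lemma S1_half_bounded:
  fixes g :: "real \<Rightarrow> ennreal" and b :: real
  assumes g[measurable]: "g \<in> borel_measurable borel" and b: "b > 0"
  shows "(\<integral>\<^sup>+x. g (x^2) * indicator {0..b} x \<partial>lborel)
       = (\<integral>\<^sup>+u. g u * ennreal (u powr (-1/2) / 2) * indicator {0..b^2} u \<partial>lborel)"
proof -
  have "(\<integral>\<^sup>+u. (g u * ennreal (u powr (-1/2) / 2)) * indicator {0^2..b^2} u \<partial>lborel)
      = (\<integral>\<^sup>+x. (g (x^2) * ennreal ((x^2) powr (-1/2) / 2)) * ennreal (2 * x) * indicator {0..b} x \<partial>lborel)"
    by (rule nn_integral_substitution_aux[where g = "\<lambda>x. x ^ 2" and g' = "\<lambda>x. 2 * x"])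
       (use b in \<open>auto intro!: derivative_eq_intros continuous_intros\<close>)
  also have "\<dots> = (\<integral>\<^sup>+x. g (x^2) * indicator {0..b} x \<partial>lborel)"
  proof (intro nn_integral_cong_AE eventually_mono[OF AE_lborel_singleton[of 0]])
    fix x :: real assume x: "x \<noteq> 0"
    show "g (x^2) * ennreal ((x^2) powr (-1/2) / 2) * ennreal (2 * x) * indicator {0..b} x
        = g (x^2) * indicator {0..b} x"
    proof (cases "x \<in> {0..b}")
      case True
      then have xp: "x > 0" using x by auto
      have "(x^2) powr (-1/2) / 2 * (2 * x) = 1"
        using xp by (simp add: powr_minus powr_half_sqrt field_split_simps)
      then have "ennreal ((x^2) powr (-1/2) / 2) * ennreal (2 * x) = 1"
        using xp by (simp add: ennreal_mult'[symmetric])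
      then show ?thesis using True by (simp add: mult.assoc)
    qed simp
  qed
  finally show ?thesis by simp
qed

lemma S1_half:
  fixes g :: "real \<Rightarrow> ennreal"
  assumes g[measurable]: "g \<in> borel_measurable borel"
  shows "(\<integral>\<^sup>+x. g (x^2) * indicator {0..} x \<partial>lborel)
       = (\<integral>\<^sup>+u. g u * ennreal (u powr (-1/2) / 2) * indicator {0..} u \<partial>lborel)"
proof -
  define F where "F = (\<lambda>n::nat. \<lambda>x::real. g (x^2) * indicator {0..real (Suc n)} x)"
  define H where "H = (\<lambda>n::nat. \<lambda>u::real. g u * ennreal (u powr (-1/2) / 2) * indicator {0..(real (Suc n))^2} u)"
  have eq: "integral\<^sup>N lborel (F n) = integral\<^sup>N lborel (H n)" for n
    unfolding F_def H_def by (rule S1_half_bounded) auto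
  have "(\<lambda>n. integral\<^sup>N lborel (F n)) \<longlonglongrightarrow> (\<integral>\<^sup>+x. g (x^2) * indicator {0..} x \<partial>lborel)"
  proof (rule nn_integral_LIMSEQ)
    show "incseq F" unfolding F_def
      by (auto simp: incseq_def le_fun_def indicator_def intro!: mult_left_mono)
    show "F i \<in> borel_measurable lborel" for i unfolding F_def by measurable
    fix x :: real
    show "(\<lambda>i. F i x) \<longlonglongrightarrow> g (x^2) * indicator {0..} x"
    proof (rule tendsto_eventually)
      obtain N :: nat where "x \<le> real N" using real_arch_simple by blast
      then show "\<forall>\<^sub>F i in sequentially. F i x = g (x^2) * indicator {0..} x"
        unfolding F_def eventually_sequentially
        by (intro exI[of _ N]) (auto simp: indicator_def)
    qed
  qed
  moreover have "(\<lambda>n. integral\<^sup>N lborel (H n)) \<longlonglongrightarrow> (\<integral>\<^sup>+u. g u * ennreal (u powr (-1/2) / 2) * indicator {0..} u \<partial>lborel)"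
  proof (rule nn_integral_LIMSEQ)
    show "incseq H" unfolding H_def incseq_def le_fun_def
    proof (intro allI impI)
      fix m n :: nat and x :: real assume "m \<le> n"
      have mn: "(real (Suc m))^2 \<le> (real (Suc n))^2" using \<open>m \<le> n\<close> by (intro power_mono) auto
      have "indicator {0..(real (Suc m))^2} x \<le> (indicator {0..(real (Suc n))^2} x :: ennreal)"
        unfolding indicator_def using order_trans[OF _ mn, of x] by auto
      then show "g x * ennreal (x powr (-1/2) / 2) * indicator {0..(real (Suc m))^2} x
          \<le> g x * ennreal (x powr (-1/2) / 2) * indicator {0..(real (Suc n))^2} x"
        by (intro mult_left_mono) auto
    qed
    show "H i \<in> borel_measurable lborel" for i unfolding H_def by measurable
    fix x :: real
    show "(\<lambda>i. H i x) \<longlonglongrightarrow> g x * ennreal (x powr (-1/2) / 2) * indicator {0..} x"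
    proof (rule tendsto_eventually)
      obtain N :: nat where N: "x \<le> real N" using real_arch_simple by blast
      have "x \<le> (real (Suc n))^2" if "n \<ge> N" for n
      proof -
        have "x \<le> real (Suc n)" using N that by simp
        also have "\<dots> \<le> (real (Suc n))^2" by (simp add: power2_eq_square)
        finally show ?thesis .
      qed
      then show "\<forall>\<^sub>F i in sequentially. H i x = g x * ennreal (x powr (-1/2) / 2) * indicator {0..} x"
        unfolding H_def eventually_sequentially
        by (intro exI[of _ N]) (auto simp: indicator_def)
    qed
  qed
  ultimately show ?thesis unfolding eq by (rule LIMSEQ_unique)
qed

lemma S1:
  fixes g :: "real \<Rightarrow> ennreal"
  assumes g[measurable]: "g \<in> borel_measurable borel"
  shows "(\<integral>\<^sup>+y. g (y^2) \<partial>lborel)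
       = (\<integral>\<^sup>+u. g u * ennreal (indicator {0<..} u * u powr (1/2 - 1)) \<partial>lborel)"
proof -
  let ?I = "\<integral>\<^sup>+x. g (x^2) * indicator {0..} x \<partial>lborel"
  have refl: "(\<integral>\<^sup>+x. g (x^2) * indicator {..0} x \<partial>lborel) = ?I"
    by (subst nn_integral_real_affine[of _ "-1" 0])
       (auto simp: indicator_def intro!: nn_integral_cong)
  have "(\<integral>\<^sup>+y. g (y^2) \<partial>lborel) = (\<integral>\<^sup>+x. g (x^2) * indicator {..0} x + g (x^2) * indicator {0..} x \<partial>lborel)"
    by (intro nn_integral_cong_AE AE_I[of _ _ "{0}"]) (auto simp: indicator_def)
  also have "\<dots> = ?I + ?I"
    by (subst nn_integral_add) (auto simp: refl)
  also have "?I = (\<integral>\<^sup>+u. g u * ennreal (u powr (-1/2) / 2) * indicator {0..} u \<partial>lborel)"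
    by (rule S1_half) simp
  also have "\<dots> + \<dots> = (\<integral>\<^sup>+u. g u * ennreal (u powr (-1/2) / 2) * indicator {0..} u + g u * ennreal (u powr (-1/2) / 2) * indicator {0..} u \<partial>lborel)"
    by (subst nn_integral_add) auto
  also have "\<dots> = (\<integral>\<^sup>+u. g u * ennreal (indicator {0<..} u * u powr (1/2 - 1)) \<partial>lborel)"
  proof (intro nn_integral_cong_AE eventually_mono[OF AE_lborel_singleton[of 0]])
    fix u :: real assume u: "u \<noteq> 0"
    show "g u * ennreal (u powr (-1/2) / 2) * indicator {0..} u + g u * ennreal (u powr (-1/2) / 2) * indicator {0..} u
        = g u * ennreal (indicator {0<..} u * u powr (1/2 - 1))"
    proof (cases "u > 0")
      case True
      have "ennreal (u powr (-1/2) / 2) + ennreal (u powr (-1/2) / 2) = ennreal (u powr (-1/2))"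
        by (subst ennreal_plus[symmetric]) auto
      then show ?thesis using True by (simp add: distrib_left[symmetric])
    next
      case False
      then show ?thesis using u by (auto simp: indicator_def)
    qed
  qed
  finally show ?thesis .
qed

lemma psf_lborel: "product_sigma_finite (\<lambda>_::'i. lborel :: real measure)"
  unfolding product_sigma_finite_def by (simp add: sigma_finite_lborel)

lemma Psi:
  fixes J :: "'i set"
  assumes "finite J" "J \<noteq> {}"
  shows "\<exists>K. \<forall>g::real \<Rightarrow> ennreal. g \<in> borel_measurable borel \<longrightarrow>
     (\<integral>\<^sup>+f. g (\<Sum>j\<in>J. (f j)^2) \<partial>PiM J (\<lambda>_. lborel))
       = K * (\<integral>\<^sup>+u. g u * ennreal (indicator {0<..} u * u powr (real (card J) / 2 - 1)) \<partial>lborel)"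
  using assms
proof (induction J rule: finite_ne_induct)
  case (singleton i)
  interpret P: product_sigma_finite "\<lambda>_::'i. lborel :: real measure" by (rule psf_lborel)
  show ?case
  proof (intro exI[of _ 1] allI impI)
    fix g :: "real \<Rightarrow> ennreal" assume g[measurable]: "g \<in> borel_measurable borel"
    have "(\<integral>\<^sup>+f. g (\<Sum>j\<in>{i}. (f j)^2) \<partial>PiM {i} (\<lambda>_. lborel)) = (\<integral>\<^sup>+f. g ((f i)^2) \<partial>PiM {i} (\<lambda>_. lborel))"
      by simp
    also have "\<dots> = (\<integral>\<^sup>+y. g (y^2) \<partial>lborel)"
      by (rule P.product_nn_integral_singleton) measurable
    also have "\<dots> = (\<integral>\<^sup>+u. g u * ennreal (indicator {0<..} u * u powr (1/2 - 1)) \<partial>lborel)"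
      by (rule S1) measurable
    finally show "(\<integral>\<^sup>+f. g (\<Sum>j\<in>{i}. (f j)^2) \<partial>PiM {i} (\<lambda>_. lborel))
       = 1 * (\<integral>\<^sup>+u. g u * ennreal (indicator {0<..} u * u powr (real (card {i}) / 2 - 1)) \<partial>lborel)"
      by simp
  qed
next
  case (insert i J)
  interpret P: product_sigma_finite "\<lambda>_::'i. lborel :: real measure" by (rule psf_lborel)
  obtain K where K: "\<And>g::real \<Rightarrow> ennreal. g \<in> borel_measurable borel \<Longrightarrow>
     (\<integral>\<^sup>+f. g (\<Sum>j\<in>J. (f j)^2) \<partial>PiM J (\<lambda>_. lborel))
       = K * (\<integral>\<^sup>+u. g u * ennreal (indicator {0<..} u * u powr (real (card J) / 2 - 1)) \<partial>lborel)"
    using insert.IH by blast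
  show ?case
  proof (intro exI[of _ "K * Cb (real (card J) / 2)"] allI impI)
    fix g :: "real \<Rightarrow> ennreal" assume g[measurable]: "g \<in> borel_measurable borel"
    define h where "h = (\<lambda>s. \<integral>\<^sup>+y. g (y^2 + s) \<partial>lborel)"
    have hm[measurable]: "h \<in> borel_measurable borel"
      unfolding h_def by measurable
    have "(\<integral>\<^sup>+f. g (\<Sum>j\<in>insert i J. (f j)^2) \<partial>PiM (insert i J) (\<lambda>_. lborel))
        = (\<integral>\<^sup>+f. (\<integral>\<^sup>+y. g (\<Sum>j\<in>insert i J. ((f(i := y)) j)^2) \<partial>lborel) \<partial>PiM J (\<lambda>_. lborel))"
      by (rule P.product_nn_integral_insert) (use insert in auto)
    also have "\<dots> = (\<integral>\<^sup>+f. h (\<Sum>j\<in>J. (f j)^2) \<partial>PiM J (\<lambda>_. lborel))"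
    proof (rule nn_integral_cong)
      fix f :: "'i \<Rightarrow> real"
      have "(\<Sum>j\<in>insert i J. ((f(i := y)) j)^2) = y^2 + (\<Sum>j\<in>J. (f j)^2)" for y
        using insert by (simp add: sum.insert) (intro sum.cong, auto)
      then show "(\<integral>\<^sup>+y. g (\<Sum>j\<in>insert i J. ((f(i := y)) j)^2) \<partial>lborel) = h (\<Sum>j\<in>J. (f j)^2)"
        by (simp add: h_def)
    qed
    also have "\<dots> = K * (\<integral>\<^sup>+u. h u * ennreal (indicator {0<..} u * u powr (real (card J) / 2 - 1)) \<partial>lborel)"
      by (rule K) (rule hm)
    also have "(\<integral>\<^sup>+u. h u * ennreal (indicator {0<..} u * u powr (real (card J) / 2 - 1)) \<partial>lborel)
        = Cb (real (card J) / 2) * (\<integral>\<^sup>+u. g u * ennreal (indicator {0<..} u * u powr (real (card J) / 2 - 1/2)) \<partial>lborel)"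
      unfolding h_def by (rule S2) (rule g)
    also have "real (card J) / 2 - 1/2 = real (card (insert i J)) / 2 - 1"
      using insert by (simp add: field_simps)
    finally show "(\<integral>\<^sup>+f. g (\<Sum>j\<in>insert i J. (f j)^2) \<partial>PiM (insert i J) (\<lambda>_. lborel))
       = K * Cb (real (card J) / 2) * (\<integral>\<^sup>+u. g u * ennreal (indicator {0<..} u * u powr (real (card (insert i J)) / 2 - 1)) \<partial>lborel)"
      by (simp add: mult.assoc)
  qed
qed

lemma gamma_half:
  fixes b :: real assumes b: "b > 0"
  shows "(\<integral>\<^sup>+u. ennreal (exp (- u / 2)) * ennreal (indicator {0<..} u * u powr (b - 1)) \<partial>lborel)
       = ennreal (2 powr b * Gamma b)"
proof -
  have "(\<integral>\<^sup>+u. ennreal (exp (- u / 2)) * ennreal (indicator {0<..} u * u powr (b - 1)) \<partial>lborel)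
      = ennreal \<bar>2\<bar> * (\<integral>\<^sup>+x. ennreal (exp (- (0 + 2 * x) / 2)) * ennreal (indicator {0<..} (0 + 2 * x) * (0 + 2 * x) powr (b - 1)) \<partial>lborel)"
    by (rule nn_integral_real_affine; simp)
  also have "(\<integral>\<^sup>+x. ennreal (exp (- (0 + 2 * x) / 2)) * ennreal (indicator {0<..} (0 + 2 * x) * (0 + 2 * x) powr (b - 1)) \<partial>lborel)
      = (\<integral>\<^sup>+x. ennreal (2 powr (b - 1)) * ennreal (indicator {0..} x * x powr (b - 1) / exp x) \<partial>lborel)"
  proof (rule nn_integral_cong)
    fix x :: real
    show "ennreal (exp (- (0 + 2 * x) / 2)) * ennreal (indicator {0<..} (0 + 2 * x) * (0 + 2 * x) powr (b - 1))
        = ennreal (2 powr (b - 1)) * ennreal (indicator {0..} x * x powr (b - 1) / exp x)"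
    proof (cases "x > 0")
      case True
      then show ?thesis
        by (simp add: ennreal_mult'[symmetric] powr_mult exp_minus field_simps)
    next
      case False
      then show ?thesis by (cases "x = 0") (auto simp: indicator_def)
    qed
  qed
  also have "\<dots> = ennreal (2 powr (b - 1)) * ennreal (Gamma b)"
    by (subst nn_integral_cmult) (auto simp: Gamma_conv_nn_integral_real[OF b])
  also have "ennreal \<bar>2\<bar> * (ennreal (2 powr (b - 1)) * ennreal (Gamma b)) = ennreal (2 * (2 powr (b - 1) * Gamma b))"
    using b by (simp add: ennreal_mult'[symmetric] Gamma_real_pos) (simp add: ennreal_mult')
  also have "2 * (2 powr (b - 1) * Gamma b) = 2 powr b * Gamma b"
    by (simp add: powr_diff)
  finally show ?thesis .
qed

lemma int_exp_sq: "(\<integral>\<^sup>+y. ennreal (exp (- (y^2) / 2)) \<partial>lborel) = ennreal (sqrt (2 * pi))"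
proof -
  have ps: "prob_space (density lborel (\<lambda>x. ennreal (std_normal_density x)))"
    by (rule prob_space_normal_density) simp
  have "emeasure (density lborel (\<lambda>x. ennreal (std_normal_density x))) UNIV = 1"
    using prob_space.emeasure_space_1[OF ps] by simp
  then have "(\<integral>\<^sup>+y. ennreal (std_normal_density y) * indicator UNIV y \<partial>lborel) = 1"
    by (subst (asm) emeasure_density) auto
  then have "(\<integral>\<^sup>+y. ennreal (std_normal_density y) \<partial>lborel) = 1" by simp
  moreover have "(\<integral>\<^sup>+y. ennreal (std_normal_density y) \<partial>lborel)
      = ennreal (1 / sqrt (2 * pi)) * (\<integral>\<^sup>+y. ennreal (exp (- (y^2) / 2)) \<partial>lborel)"
    by (subst nn_integral_cmult[symmetric]) (auto simp: std_normal_density_def ennreal_mult'[symmetric])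
  ultimately have "ennreal (1 / sqrt (2 * pi)) * (\<integral>\<^sup>+y. ennreal (exp (- (y^2) / 2)) \<partial>lborel) = 1" by simp
  then have "ennreal (sqrt (2 * pi)) * (ennreal (1 / sqrt (2 * pi)) * (\<integral>\<^sup>+y. ennreal (exp (- (y^2) / 2)) \<partial>lborel))
       = ennreal (sqrt (2 * pi))" by simp
  moreover have "ennreal (sqrt (2 * pi)) * ennreal (1 / sqrt (2 * pi)) = 1"
    by (subst ennreal_mult'[symmetric]) auto
  ultimately show ?thesis by (simp add: mult.assoc[symmetric])
qed

lemma chi_moment:
  fixes J :: "'i set" and p :: real
  assumes J: "finite J" "J \<noteq> {}" and p: "p \<ge> 0"
  shows "(\<integral>\<^sup>+f. ennreal ((\<Sum>j\<in>J. (f j)^2) powr (p/2) * (\<Prod>j\<in>J. std_normal_density (f j))) \<partial>PiM J (\<lambda>_. lborel))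
       = ennreal (2 powr (p/2) * Gamma ((real (card J) + p) / 2) / Gamma (real (card J) / 2))"
proof -
  interpret P: product_sigma_finite "\<lambda>_::'i. lborel :: real measure" by (rule psf_lborel)
  define n where "n = card J"
  define a where "a = real n / 2"
  have n: "n \<ge> 1" using J by (simp add: n_def Suc_le_eq card_gt_0_iff)
  have a: "a > 0" using n by (simp add: a_def)
  obtain K where K: "\<And>g::real \<Rightarrow> ennreal. g \<in> borel_measurable borel \<Longrightarrow>
     (\<integral>\<^sup>+f. g (\<Sum>j\<in>J. (f j)^2) \<partial>PiM J (\<lambda>_. lborel))
       = K * (\<integral>\<^sup>+u. g u * ennreal (indicator {0<..} u * u powr (a - 1)) \<partial>lborel)"
    using Psi[OF J] unfolding a_def n_def by blast
  have prodexp: "(\<Prod>j\<in>J. exp (- ((f j)^2) / 2)) = exp (- (\<Sum>j\<in>J. (f j)^2) / 2)" for f :: "'i \<Rightarrow> real"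
    using J(1) by (simp add: exp_sum sum_negf[symmetric] sum_divide_distrib)
  have "(\<integral>\<^sup>+f. ennreal (exp (- (\<Sum>j\<in>J. (f j)^2) / 2)) \<partial>PiM J (\<lambda>_. lborel))
      = (\<integral>\<^sup>+f. (\<Prod>j\<in>J. ennreal (exp (- ((f j)^2) / 2))) \<partial>PiM J (\<lambda>_. lborel))"
  proof (rule nn_integral_cong)
    fix f :: "'i \<Rightarrow> real"
    show "ennreal (exp (- (\<Sum>j\<in>J. (f j)^2) / 2)) = (\<Prod>j\<in>J. ennreal (exp (- ((f j)^2) / 2)))"
      unfolding prodexp[symmetric] by (rule prod_ennreal[symmetric]) simp
  qed
  also have "\<dots> = (\<Prod>j\<in>J. (\<integral>\<^sup>+y. ennreal (exp (- (y^2) / 2)) \<partial>lborel))"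
    by (rule P.product_nn_integral_prod) (use J in auto)
  also have "\<dots> = ennreal (sqrt (2 * pi) ^ n)"
    by (simp only: int_exp_sq prod_constant) (simp add: n_def ennreal_power)
  finally have L0: "(\<integral>\<^sup>+f. ennreal (exp (- (\<Sum>j\<in>J. (f j)^2) / 2)) \<partial>PiM J (\<lambda>_. lborel)) = ennreal (sqrt (2 * pi) ^ n)" .
  have R0: "(\<integral>\<^sup>+f. ennreal (exp (- (\<Sum>j\<in>J. (f j)^2) / 2)) \<partial>PiM J (\<lambda>_. lborel)) = K * ennreal (2 powr a * Gamma a)"
    using K[of "\<lambda>s. ennreal (exp (- s / 2))"] gamma_half[OF a] by simp
  have Kfin: "K \<noteq> Orderings.top"
  proof
    assume "K = Orderings.top"
    then have "K * ennreal (2 powr a * Gamma a) = Orderings.top"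
    proof -
      have pos: "2 powr a * Gamma a > 0" by (intro mult_pos_pos) (auto intro: Gamma_real_pos[OF a])
      have ne: "ennreal (2 powr a * Gamma a) \<noteq> 0" by (simp only: ennreal_eq_0_iff not_le) (rule pos)
      show ?thesis unfolding \<open>K = Orderings.top\<close> ennreal_top_mult using ne by (simp only: if_False)
    qed
    with L0 R0 show False by simp
  qed
  define k where "k = enn2real K"
  have Kk: "K = ennreal k" using Kfin unfolding k_def by (cases K) auto
  have k0: "k \<ge> 0" unfolding k_def by simp
  have T0: "2 powr a * Gamma a > 0" by (intro mult_pos_pos) (auto intro: Gamma_real_pos[OF a])
  have "ennreal (sqrt (2 * pi) ^ n) = ennreal k * ennreal (2 powr a * Gamma a)"
    using L0 R0 unfolding Kk by simp
  also have "\<dots> = ennreal (k * (2 powr a * Gamma a))"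
    by (rule ennreal_mult'[symmetric]) (rule k0)
  finally have eq0: "sqrt (2 * pi) ^ n = k * (2 powr a * Gamma a)"
    using k0 T0 by (subst (asm) ennreal_inj) auto
  have ap: "a + p / 2 > 0" using a p by simp
  have Rp: "(\<integral>\<^sup>+f. ennreal ((\<Sum>j\<in>J. (f j)^2) powr (p/2) * exp (- (\<Sum>j\<in>J. (f j)^2) / 2)) \<partial>PiM J (\<lambda>_. lborel))
      = K * ennreal (2 powr (a + p/2) * Gamma (a + p/2))"
  proof -
    have "(\<integral>\<^sup>+f. ennreal ((\<Sum>j\<in>J. (f j)^2) powr (p/2) * exp (- (\<Sum>j\<in>J. (f j)^2) / 2)) \<partial>PiM J (\<lambda>_. lborel))
      = K * (\<integral>\<^sup>+u. ennreal (u powr (p/2) * exp (- u / 2)) * ennreal (indicator {0<..} u * u powr (a - 1)) \<partial>lborel)"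
      by (rule K) measurable
    also have "(\<integral>\<^sup>+u. ennreal (u powr (p/2) * exp (- u / 2)) * ennreal (indicator {0<..} u * u powr (a - 1)) \<partial>lborel)
      = (\<integral>\<^sup>+u. ennreal (exp (- u / 2)) * ennreal (indicator {0<..} u * u powr (a + p/2 - 1)) \<partial>lborel)"
    proof (rule nn_integral_cong)
      fix u :: real
      show "ennreal (u powr (p/2) * exp (- u / 2)) * ennreal (indicator {0<..} u * u powr (a - 1))
          = ennreal (exp (- u / 2)) * ennreal (indicator {0<..} u * u powr (a + p/2 - 1))"
      proof (cases "u > 0")
        case True
        have "u powr (p/2) * u powr (a - 1) = u powr (a + p/2 - 1)"
          using True by (simp add: powr_add[symmetric] algebra_simps)
        then show ?thesis using True
          by (simp add: ennreal_mult'[symmetric] mult_ac)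
      qed (simp add: indicator_def)
    qed
    also have "\<dots> = ennreal (2 powr (a + p/2) * Gamma (a + p/2))"
      by (rule gamma_half[OF ap])
    finally show ?thesis .
  qed
  have "(\<integral>\<^sup>+f. ennreal ((\<Sum>j\<in>J. (f j)^2) powr (p/2) * (\<Prod>j\<in>J. std_normal_density (f j))) \<partial>PiM J (\<lambda>_. lborel))
      = (\<integral>\<^sup>+f. ennreal ((1 / sqrt (2 * pi)) ^ n) * ennreal ((\<Sum>j\<in>J. (f j)^2) powr (p/2) * exp (- (\<Sum>j\<in>J. (f j)^2) / 2)) \<partial>PiM J (\<lambda>_. lborel))"
  proof (rule nn_integral_cong)
    fix f :: "'i \<Rightarrow> real"
    have "(\<Prod>j\<in>J. std_normal_density (f j)) = (1 / sqrt (2 * pi)) ^ n * exp (- (\<Sum>j\<in>J. (f j)^2) / 2)"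
    proof -
      have "(\<Prod>j\<in>J. std_normal_density (f j)) = (\<Prod>j\<in>J. (1 / sqrt (2 * pi)) * exp (- ((f j)^2) / 2))"
        by (simp only: std_normal_density_def)
      also have "\<dots> = (\<Prod>j\<in>J. (1 / sqrt (2 * pi))) * (\<Prod>j\<in>J. exp (- ((f j)^2) / 2))"
        by (rule prod.distrib)
      also have "\<dots> = (1 / sqrt (2 * pi)) ^ n * exp (- (\<Sum>j\<in>J. (f j)^2) / 2)"
        by (simp only: prod_constant prodexp n_def)
      finally show ?thesis .
    qed
    then show "ennreal ((\<Sum>j\<in>J. (f j)^2) powr (p/2) * (\<Prod>j\<in>J. std_normal_density (f j)))
      = ennreal ((1 / sqrt (2 * pi)) ^ n) * ennreal ((\<Sum>j\<in>J. (f j)^2) powr (p/2) * exp (- (\<Sum>j\<in>J. (f j)^2) / 2))"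
      by (simp add: ennreal_mult'[symmetric] mult_ac)
  qed
  also have "\<dots> = ennreal ((1 / sqrt (2 * pi)) ^ n) * (K * ennreal (2 powr (a + p/2) * Gamma (a + p/2)))"
    using Rp by (subst nn_integral_cmult) auto
  also have "\<dots> = ennreal ((1 / sqrt (2 * pi)) ^ n * k * (2 powr (a + p/2) * Gamma (a + p/2)))"
  proof -
    have "ennreal ((1 / sqrt (2 * pi)) ^ n * k * (2 powr (a + p/2) * Gamma (a + p/2)))
        = ennreal ((1 / sqrt (2 * pi)) ^ n * k) * ennreal (2 powr (a + p/2) * Gamma (a + p/2))"
      by (rule ennreal_mult') (use k0 in simp)
    also have "ennreal ((1 / sqrt (2 * pi)) ^ n * k) = ennreal ((1 / sqrt (2 * pi)) ^ n) * ennreal k"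
      by (rule ennreal_mult') simp
    finally show ?thesis unfolding Kk by (simp only: mult.assoc)
  qed
  also have "(1 / sqrt (2 * pi)) ^ n * k * (2 powr (a + p/2) * Gamma (a + p/2))
      = 2 powr (p/2) * Gamma ((real (card J) + p) / 2) / Gamma (real (card J) / 2)"
  proof -
    have g: "Gamma a > 0" using a by (rule Gamma_real_pos)
    have aa: "a + p/2 = (real (card J) + p) / 2" "a = real (card J) / 2" by (simp_all add: a_def n_def add_divide_distrib)
    have e1: "(1 / sqrt (2 * pi)) ^ n * sqrt (2 * pi) ^ n = 1"
      by (simp add: power_mult_distrib[symmetric])
    have s: "sqrt (2 * pi) ^ n > 0" by simp
    have k: "k = sqrt (2 * pi) ^ n / (2 powr a * Gamma a)" using eq0 g by (simp add: field_simps)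
    have "(1 / sqrt (2 * pi)) ^ n * k * (2 powr (a + p/2) * Gamma (a + p/2)) = 2 powr (p/2) * Gamma (a + p/2) / Gamma a"
      unfolding k powr_add using g s e1 by (simp add: field_simps)
    then show ?thesis by (simp only: aa(1)[symmetric] aa(2)[symmetric])
  qed
  finally show ?thesis .
qed


text \<open>Linear images and Lebesgue measure, for an arbitrary finite index type
 (the library version requires a well-order on the index type).\<close>

lemma measure_linear_image_fin:
  fixes f :: "real^'n \<Rightarrow> real^'n"
  assumes "linear f" "S \<in> lmeasurable"
  shows "(f ` S) \<in> lmeasurable \<and> measure lebesgue (f ` S) = \<bar>det (matrix f)\<bar> * measure lebesgue S"
proof -
  have "\<forall>S \<in> lmeasurable. (f ` S) \<in> lmeasurable \<and> measure lebesgue (f ` S) = \<bar>det (matrix f)\<bar> * measure lebesgue S"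
  proof (rule induct_linear_elementary [OF \<open>linear f\<close>]; intro ballI)
    fix f g :: "real^'n \<Rightarrow> real^'n" and S :: "(real^'n) set"
    assume "linear f" and "linear g"
      and f [rule_format]: "\<forall>S \<in> lmeasurable. f ` S \<in> lmeasurable \<and> measure lebesgue (f ` S) = \<bar>det (matrix f)\<bar> * measure lebesgue S"
      and g [rule_format]: "\<forall>S \<in> lmeasurable. g ` S \<in> lmeasurable \<and> measure lebesgue (g ` S) = \<bar>det (matrix g)\<bar> * measure lebesgue S"
      and S: "S \<in> lmeasurable"
    then have gS: "g ` S \<in> lmeasurable"
      by blast
    show "(f \<circ> g) ` S \<in> lmeasurable \<and> measure lebesgue ((f \<circ> g) ` S) = \<bar>det (matrix (f \<circ> g))\<bar> * measure lebesgue S"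
      using f [OF gS] g [OF S] matrix_compose [OF \<open>linear g\<close> \<open>linear f\<close>]
      by (simp add: o_def image_comp abs_mult det_mul)
  next
    fix f :: "real^'n \<Rightarrow> real^'n" and i and S :: "(real^'n) set"
    assume "linear f" and 0: "\<And>x. f x $ i = 0" and "S \<in> lmeasurable"
    then have "\<not> inj f"
      by (metis (full_types) linear_injective_imp_surjective one_neq_zero surjE vec_component)
    have detf: "det (matrix f) = 0"
      using \<open>\<not> inj f\<close> det_nz_iff_inj[OF \<open>linear f\<close>] by blast
    show "f ` S \<in> lmeasurable \<and> measure lebesgue (f ` S) = \<bar>det (matrix f)\<bar> * measure lebesgue S"
    proof
      show "f ` S \<in> lmeasurable"
        using lmeasurable_iff_indicator_has_integral \<open>linear f\<close> \<open>\<not> inj f\<close> negligible_UNIV negligible_linear_singular_image by blast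
      have "measure lebesgue (f ` S) = 0"
        by (meson \<open>\<not> inj f\<close> \<open>linear f\<close> negligible_imp_measure0 negligible_linear_singular_image)
      also have "\<dots> = \<bar>det (matrix f)\<bar> * measure lebesgue S"
        by (simp add: detf)
      finally show "measure lebesgue (f ` S) = \<bar>det (matrix f)\<bar> * measure lebesgue S" .
    qed
  next
    fix c and S :: "(real^'n) set"
    assume "S \<in> lmeasurable"
    show "(\<lambda>a. \<chi> i. c i * a $ i) ` S \<in> lmeasurable \<and> measure lebesgue ((\<lambda>a. \<chi> i. c i * a $ i) ` S) = \<bar>det (matrix (\<lambda>a. \<chi> i. c i * a $ i))\<bar> * measure lebesgue S"
    proof
      show "(\<lambda>a. \<chi> i. c i * a $ i) ` S \<in> lmeasurable"
        by (simp add: \<open>S \<in> lmeasurable\<close> measurable_stretch)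
      show "measure lebesgue ((\<lambda>a. \<chi> i. c i * a $ i) ` S) = \<bar>det (matrix (\<lambda>a. \<chi> i. c i * a $ i))\<bar> * measure lebesgue S"
        by (simp add: measure_stretch [OF \<open>S \<in> lmeasurable\<close>, of c] axis_def matrix_def det_diagonal)
    qed
  next
    fix m :: "'n" and n :: "'n" and S :: "(real^'n) set"
    assume "m \<noteq> n" and "S \<in> lmeasurable"
    let ?h = "\<lambda>v::real^'n. \<chi> i. v $ Transposition.transpose m n i"
    have lin: "linear ?h"
      by (rule linearI) (simp_all add: Finite_Cartesian_Product.plus_vec_def scaleR_vec_def)
    have meq: "measure lebesgue ((\<lambda>v::real^'n. \<chi> i. v $ Transposition.transpose m n i) ` cbox a b)
             = measure lebesgue (cbox a b)" for a b
    proof (cases "cbox a b = {}")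
      case True then show ?thesis
        by simp
    next
      case False
      then have him: "?h ` (cbox a b) \<noteq> {}"
        by blast
      have eq: "?h ` (cbox a b) = cbox (?h a) (?h b)"
        by (auto simp: image_iff lambda_swap_Galois mem_box_cart) (metis transpose_involutory)+
      show ?thesis
        using him prod.permute [OF permutes_swap_id, where S=UNIV and g="\<lambda>i. (b - a)$i", symmetric]
        by (simp add: eq content_cbox_cart False)
    qed
    have "(\<chi> i j. if Transposition.transpose m n i = j then 1 else 0) = (\<chi> i j. if j = Transposition.transpose m n i then 1 else (0::real))"
      by (auto intro!: Cart_lambda_cong)
    then have "matrix ?h = transpose(\<chi> i j. mat 1 $ i $ Transposition.transpose m n j)"
      by (auto simp: matrix_eq transpose_def axis_def Finite_Cartesian_Product.mat_def matrix_def)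
    then have 1: "\<bar>det (matrix ?h)\<bar> = 1"
      by (simp add: det_permute_columns permutes_swap_id sign_swap_id abs_mult)
    show "?h ` S \<in> lmeasurable \<and> measure lebesgue (?h ` S) = \<bar>det (matrix ?h)\<bar> * measure lebesgue S"
      using measure_linear_sufficient [OF lin \<open>S \<in> lmeasurable\<close>] meq 1 by force
  next
    fix m n :: "'n" and S :: "(real^'n) set"
    assume "m \<noteq> n" and "S \<in> lmeasurable"
    let ?h = "\<lambda>v::real^'n. \<chi> i. if i = m then v $ m + v $ n else v $ i"
    have lin: "linear ?h"
      by (rule linearI) (auto simp: algebra_simps Finite_Cartesian_Product.plus_vec_def scaleR_vec_def Finite_Cartesian_Product.vec_eq_iff)
    have mh: "matrix ?h = (\<chi> k. if k = m then row m (mat 1) + 1 *s row n (mat 1) else row k (mat 1))"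
      by (auto simp: matrix_def Finite_Cartesian_Product.vec_eq_iff Finite_Cartesian_Product.row_def Finite_Cartesian_Product.mat_def axis_def)
    have 1: "det(matrix ?h) = 1"
      unfolding mh by (simp only: det_row_operation[OF \<open>m \<noteq> n\<close>] det_I)
    have meq: "measure lebesgue (?h ` (cbox a b)) = measure lebesgue (cbox a b)" for a b
    proof (cases "cbox a b = {}")
      case True then show ?thesis by simp
    next
      case False
      then have ne: "(+) (\<chi> i. if i = n then - a $ n else 0) ` cbox a b \<noteq> {}"
        by auto
      let ?v = "\<chi> i. if i = n then - a $ n else 0"
      have "?h ` cbox a b
            = (+) (\<chi> i. if i = m \<or> i = n then a $ n else 0) ` ?h ` (+) ?v ` (cbox a b)"
        using \<open>m \<noteq> n\<close> unfolding image_comp o_def by (force simp: Finite_Cartesian_Product.vec_eq_iff)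
      then have "measure lebesgue (?h ` (cbox a b))
               = measure lebesgue ((\<lambda>v. \<chi> i. if i = m then v $ m + v $ n else v $ i) `
                                   (+) ?v ` cbox a b)"
        by (rule ssubst) (rule measure_translation)
      also have "\<dots> = measure lebesgue ((\<lambda>v. \<chi> i. if i = m then v $ m + v $ n else v $ i) ` cbox (?v +a) (?v + b))"
        by (metis (no_types, lifting) cbox_translation)
      also have "\<dots> = measure lebesgue ((+) ?v ` cbox a b)"
        apply (subst measure_shear_interval)
        using \<open>m \<noteq> n\<close> ne apply auto
        apply (simp add: cbox_translation)
        by (metis cbox_borel cbox_translation measure_completion sets_lborel)
      also have "\<dots> = measure lebesgue (cbox a b)"
        by (rule measure_translation)
        finally show ?thesis .
      qed
    show "?h ` S \<in> lmeasurable \<and> measure lebesgue (?h ` S) = \<bar>det (matrix ?h)\<bar> * measure lebesgue S"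
      using measure_linear_sufficient [OF lin \<open>S \<in> lmeasurable\<close>] meq 1 by force
  qed
  with assms show ?thesis
    by metis
qed

lemma lborel_orthogonal:
  fixes f :: "real^'n \<Rightarrow> real^'n"
  assumes f: "orthogonal_transformation f"
  shows "distr lborel borel f = lborel"
proof (rule lborel_eqI[symmetric])
  show "sets (distr lborel borel f) = sets borel" by simp
next
  fix l u :: "real^'n"
  assume lu: "\<And>b. b \<in> Basis \<Longrightarrow> l \<bullet> b \<le> u \<bullet> b"
  obtain g where g: "orthogonal_transformation g" "\<And>x. g (f x) = x" "\<And>x. f (g x) = x"
    using orthogonal_transformation_inv[OF f] f
    by (metis bij_betw_imp_surj_on bij_inv_eq_iff orthogonal_transformation_bij)
  have lin_f: "linear f" and lin_g: "linear g"
    using f g(1) by (auto simp: orthogonal_transformation_linear)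
  have bl: "bounded_linear f" using lin_f linear_conv_bounded_linear by blast
  have mf: "f \<in> borel_measurable borel"
    by (intro borel_measurable_continuous_onI linear_continuous_on bl)
  have pre: "f -` box l u = g ` box l u"
    using g by (auto simp: image_iff) (metis g(3))
  have open_gb: "open (g ` box l u)"
    unfolding pre[symmetric] by (rule open_vimage) (auto intro: linear_continuous_on bl)
  have lm: "box l u \<in> lmeasurable" by simp
  have gl: "g ` box l u \<in> lmeasurable"
    and gm: "measure lebesgue (g ` box l u) = measure lebesgue (box l u)"
    using measure_linear_image_fin[OF lin_g lm] orthogonal_transformation_det[OF g(1)] by auto
  have "emeasure (distr lborel borel f) (box l u) = emeasure lborel (f -` box l u)"
    by (subst emeasure_distr) (auto simp: mf)
  also have "\<dots> = emeasure lborel (g ` box l u)" by (simp add: pre)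
  also have "\<dots> = emeasure lebesgue (g ` box l u)"
    using open_gb by (simp add: emeasure_completion borel_open)
  also have "\<dots> = ennreal (measure lebesgue (g ` box l u))"
    using gl by (simp add: emeasure_eq_measure2)
  also have "\<dots> = ennreal (measure lebesgue (box l u))" by (simp add: gm)
  also have "\<dots> = emeasure lborel (box l u)"
    using lm by (simp add: emeasure_eq_measure2 measure_completion)
  also have "\<dots> = (\<Prod>b\<in>Basis. (u - l) \<bullet> b)"
    using lu by (simp add: emeasure_lborel_box_eq box_eq_empty inner_diff_left)
  finally show "emeasure (distr lborel borel f) (box l u) = (\<Prod>b\<in>Basis. (u - l) \<bullet> b)" .
qed


lemma Basis_vec_range: "(Basis :: (real^'d) set) = range (\<lambda>i. axis i 1)"
  by (auto simp: Basis_vec_def)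

lemma inj_axis1: "inj (\<lambda>i::'d::finite. axis i (1::real))"
  by (auto simp: inj_on_def axis_eq_axis)

lemma vec_sum_basis: "(\<Sum>b\<in>(Basis :: (real^'d) set). f b *\<^sub>R b) $ j = f (axis j 1)"
proof -
  have "(\<Sum>b\<in>(Basis :: (real^'d) set). f b *\<^sub>R b) = (\<Sum>i\<in>UNIV. f (axis i 1) *\<^sub>R axis i (1::real))"
    unfolding Basis_vec_range by (subst sum.reindex[OF inj_axis1]) simp
  also have "\<dots> $ j = (\<Sum>i\<in>UNIV. f (axis i 1) * (axis i (1::real) $ j))"
    by (simp add: sum_component)
  also have "\<dots> = (\<Sum>i\<in>UNIV. if i = j then f (axis j 1) else 0)"
    by (intro sum.cong) (auto simp: axis_def)
  also have "\<dots> = f (axis j 1)"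
    by simp
  finally show ?thesis .
qed

lemma std_normal_int1: "(\<integral>\<^sup>+y. ennreal (std_normal_density y) \<partial>lborel) = 1"
proof -
  have ps: "prob_space (density lborel (\<lambda>x. ennreal (std_normal_density x)))"
    by (rule prob_space_normal_density) simp
  have "emeasure (density lborel (\<lambda>x. ennreal (std_normal_density x))) UNIV = 1"
    using prob_space.emeasure_space_1[OF ps] by simp
  then have "(\<integral>\<^sup>+y. ennreal (std_normal_density y) * indicator UNIV y \<partial>lborel) = 1"
    by (subst (asm) emeasure_density) auto
  then show ?thesis by simp
qed

lemma vec_nth_meas[measurable]: "(\<lambda>x::real^'d. x $ j) \<in> borel_measurable borel"
  by (intro borel_measurable_continuous_onI continuous_intros)

lemma gd_meas[measurable]: "std_gaussian_density \<in> borel_measurable borel"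
  unfolding std_gaussian_density_def[abs_def] normal_density_def
  by (intro borel_measurable_continuous_onI continuous_intros) auto

lemma gd_nonneg: "std_gaussian_density x \<ge> 0"
  unfolding std_gaussian_density_def by (intro prod_nonneg) (simp add: normal_density_nonneg)

definition chi_c :: "nat \<Rightarrow> real \<Rightarrow> real" where
  "chi_c n p = 2 powr (p/2) * Gamma ((real n + p) / 2) / Gamma (real n / 2)"

lemma G_red:
  fixes J :: "'d::finite set" and p :: real
  assumes J: "J \<noteq> {}" and p: "p \<ge> 0"
  shows "(\<integral>\<^sup>+x. ennreal ((\<Sum>j\<in>J. (x $ j)^2) powr (p/2) * std_gaussian_density x) \<partial>lborel)
       = ennreal (chi_c (card J) p)"
proof -
  interpret P: product_sigma_finite "\<lambda>_::(real^'d). lborel :: real measure" by (rule psf_lborel)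
  define ax where "ax = (\<lambda>i::'d. axis i (1::real))"
  define BJ where "BJ = ax ` J"
  define Bc where "Bc = (Basis :: (real^'d) set) - BJ"
  have injax: "inj ax" unfolding ax_def by (rule inj_axis1)
  have BJB: "BJ \<subseteq> Basis" unfolding BJ_def ax_def Basis_vec_range by auto
  have BU: "(Basis :: (real^'d) set) = BJ \<union> Bc" and BD: "BJ \<inter> Bc = {}"
    using BJB unfolding Bc_def by auto
  have cBJ: "card BJ = card J" unfolding BJ_def using injax by (simp add: card_image inj_on_subset)
  have BJne: "BJ \<noteq> {}" using J unfolding BJ_def by simp
  define A where "A = (\<lambda>f::(real^'d) \<Rightarrow> real. ennreal ((\<Sum>b\<in>BJ. (f b)^2) powr (p/2) * (\<Prod>b\<in>BJ. std_normal_density (f b))))"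
  define Q where "Q = (\<lambda>f::(real^'d) \<Rightarrow> real. A f * (\<Prod>b\<in>Bc. ennreal (std_normal_density (f b))))"
  have Am[measurable]: "A \<in> borel_measurable (PiM BJ (\<lambda>_. lborel))" unfolding A_def by measurable
  have BJin: "b \<in> BJ \<Longrightarrow> b \<in> Basis" for b using BJB by auto
  have Bcin: "b \<in> Bc \<Longrightarrow> b \<in> Basis" for b unfolding Bc_def by auto
  have Qm: "Q \<in> borel_measurable (PiM Basis (\<lambda>_. lborel))"
    unfolding Q_def A_def using BJin Bcin by measurable
  have "(\<integral>\<^sup>+x. ennreal ((\<Sum>j\<in>J. (x $ j)^2) powr (p/2) * std_gaussian_density x) \<partial>lborel)
      = (\<integral>\<^sup>+f. ennreal ((\<Sum>j\<in>J. ((\<Sum>b\<in>Basis. f b *\<^sub>R b) $ j)^2) powr (p/2) * std_gaussian_density (\<Sum>b\<in>Basis. f b *\<^sub>R b)) \<partial>PiM Basis (\<lambda>_. lborel))"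
    by (subst lborel_eq) (subst nn_integral_distr, auto)
  also have "\<dots> = (\<integral>\<^sup>+f. Q f \<partial>PiM Basis (\<lambda>_. lborel))"
  proof (rule nn_integral_cong)
    fix f :: "(real^'d) \<Rightarrow> real"
    have s: "(\<Sum>j\<in>J. ((\<Sum>b\<in>Basis. f b *\<^sub>R b) $ j)^2) = (\<Sum>b\<in>BJ. (f b)^2)"
      unfolding vec_sum_basis BJ_def ax_def by (subst sum.reindex) (auto intro: inj_on_subset[OF inj_axis1])
    have "std_gaussian_density (\<Sum>b\<in>Basis. f b *\<^sub>R b) = (\<Prod>b\<in>Basis. std_normal_density (f b))"
      unfolding std_gaussian_density_def vec_sum_basis unfolding Basis_vec_range
      by (subst prod.reindex[OF inj_axis1]) simp
    also have "\<dots> = (\<Prod>b\<in>BJ. std_normal_density (f b)) * (\<Prod>b\<in>Bc. std_normal_density (f b))"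
      unfolding BU by (rule prod.union_disjoint) (use BD BU in \<open>auto intro: finite_subset[of _ Basis]\<close>)
    finally show "ennreal ((\<Sum>j\<in>J. ((\<Sum>b\<in>Basis. f b *\<^sub>R b) $ j)^2) powr (p/2) * std_gaussian_density (\<Sum>b\<in>Basis. f b *\<^sub>R b)) = Q f"
      unfolding Q_def A_def s
      by (simp add: ennreal_mult'[symmetric] prod_ennreal prod_nonneg normal_density_nonneg mult.assoc)
  qed
  also have "\<dots> = (\<integral>\<^sup>+f. Q f \<partial>PiM (BJ \<union> Bc) (\<lambda>_. lborel))" unfolding BU ..
  also have "\<dots> = (\<integral>\<^sup>+x. (\<integral>\<^sup>+y. Q (merge BJ Bc (x, y)) \<partial>PiM Bc (\<lambda>_. lborel)) \<partial>PiM BJ (\<lambda>_. lborel))"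
    by (rule P.product_nn_integral_fold) (use BD BU Qm in \<open>auto intro: finite_subset[of _ Basis]\<close>)
  also have "\<dots> = (\<integral>\<^sup>+x. A x \<partial>PiM BJ (\<lambda>_. lborel))"
  proof (rule nn_integral_cong)
    fix x :: "(real^'d) \<Rightarrow> real"
    have fBc: "finite Bc" unfolding Bc_def by simp
    have "(\<integral>\<^sup>+y. Q (merge BJ Bc (x, y)) \<partial>PiM Bc (\<lambda>_. lborel))
        = (\<integral>\<^sup>+y. A x * (\<Prod>b\<in>Bc. ennreal (std_normal_density (y b))) \<partial>PiM Bc (\<lambda>_. lborel))"
    proof (rule nn_integral_cong)
      fix y :: "(real^'d) \<Rightarrow> real"
      have "A (merge BJ Bc (x, y)) = A x"
        unfolding A_def merge_def by (auto intro!: arg_cong[where f = ennreal] sum.cong prod.cong)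
      moreover have "(\<Prod>b\<in>Bc. ennreal (std_normal_density (merge BJ Bc (x, y) b))) = (\<Prod>b\<in>Bc. ennreal (std_normal_density (y b)))"
        using BD unfolding merge_def by (auto intro!: prod.cong)
      ultimately show "Q (merge BJ Bc (x, y)) = A x * (\<Prod>b\<in>Bc. ennreal (std_normal_density (y b)))"
        unfolding Q_def by simp
    qed
    also have "\<dots> = A x * (\<integral>\<^sup>+y. (\<Prod>b\<in>Bc. ennreal (std_normal_density (y b))) \<partial>PiM Bc (\<lambda>_. lborel))"
      by (rule nn_integral_cmult) measurable
    also have "(\<integral>\<^sup>+y. (\<Prod>b\<in>Bc. ennreal (std_normal_density (y b))) \<partial>PiM Bc (\<lambda>_. lborel)) = 1"
      by (subst P.product_nn_integral_prod) (auto simp: fBc std_normal_int1)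
    finally show "(\<integral>\<^sup>+y. Q (merge BJ Bc (x, y)) \<partial>PiM Bc (\<lambda>_. lborel)) = A x" by simp
  qed
  also have "\<dots> = ennreal (chi_c (card J) p)"
    unfolding A_def chi_c_def cBJ[symmetric]
    by (rule chi_moment) (use BJne BJB p in \<open>auto intro: finite_subset[of _ Basis]\<close>)
  finally show ?thesis .
qed

lemma norm_sq_vec: "(norm (x::real^'d))^2 = (\<Sum>j\<in>UNIV. (x $ j)^2)"
proof -
  have "(norm x)^2 = x \<bullet> x" by (rule power2_norm_eq_inner)
  also have "\<dots> = (\<Sum>j\<in>UNIV. x $ j \<bullet> x $ j)" by (simp only: inner_vec_def)
  finally show ?thesis by (simp add: power2_eq_square)
qed

lemma gd_norm: "std_gaussian_density (x::real^'d) = (1 / sqrt (2 * pi)) ^ CARD('d) * exp (- ((norm x)^2) / 2)"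
proof -
  have "std_gaussian_density x = (\<Prod>j\<in>UNIV. (1 / sqrt (2 * pi)) * exp (- ((x $ j)^2) / 2))"
    unfolding std_gaussian_density_def by (simp only: std_normal_density_def)
  also have "\<dots> = (\<Prod>j\<in>(UNIV::'d set). (1 / sqrt (2 * pi))) * (\<Prod>j\<in>UNIV. exp (- ((x $ j)^2) / 2))"
    by (rule prod.distrib)
  also have "(\<Prod>j\<in>UNIV. exp (- ((x $ j)^2) / 2)) = exp (- ((norm x)^2) / 2)"
    unfolding norm_sq_vec by (simp add: exp_sum sum_negf[symmetric] sum_divide_distrib)
  finally show ?thesis by simp
qed

lemma gauss_orth:
  fixes f :: "real^'d \<Rightarrow> real^'d" and F :: "real^'d \<Rightarrow> ennreal"
  assumes f: "orthogonal_transformation f" and F[measurable]: "F \<in> borel_measurable borel"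
  shows "(\<integral>\<^sup>+x. F (f x) * ennreal (std_gaussian_density x) \<partial>lborel) = (\<integral>\<^sup>+x. F x * ennreal (std_gaussian_density x) \<partial>lborel)"
proof -
  have lin: "linear f" using f by (simp add: orthogonal_transformation)
  have bl: "bounded_linear f" using lin linear_conv_bounded_linear by blast
  have mf[measurable]: "f \<in> borel_measurable borel"
    by (intro borel_measurable_continuous_onI linear_continuous_on bl)
  have gf: "std_gaussian_density (f x) = std_gaussian_density x" for x
    unfolding gd_norm using f by (simp add: orthogonal_transformation)
  have "(\<integral>\<^sup>+x. F (f x) * ennreal (std_gaussian_density x) \<partial>lborel) = (\<integral>\<^sup>+x. F (f x) * ennreal (std_gaussian_density (f x)) \<partial>lborel)"
    by (simp add: gf)
  also have "\<dots> = (\<integral>\<^sup>+y. F y * ennreal (std_gaussian_density y) \<partial>distr lborel borel f)"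
    by (subst nn_integral_distr) auto
  also have "\<dots> = (\<integral>\<^sup>+y. F y * ennreal (std_gaussian_density y) \<partial>lborel)"
    by (simp add: lborel_orthogonal[OF f])
  finally show ?thesis .
qed

lemma powr_sq_half:
  fixes y p :: real assumes "y \<ge> 0" shows "y powr p = (y^2) powr (p/2)"
proof (cases "y = 0")
  case False
  then have y: "y > 0" using assms by simp
  have "(y^2) powr (p/2) = (y powr 2) powr (p/2)" using y by (simp add: powr_numeral)
  also have "\<dots> = y powr p" by (simp add: powr_powr)
  finally show ?thesis ..
qed simp

lemma perp_moment:
  fixes V :: "(real^'d) set" and p :: real
  assumes V: "subspace V" and dV: "dim V < CARD('d)" and p: "p \<ge> 0"
  obtains P where "\<And>t. t - P t \<in> V" "\<And>t v. v \<in> V \<Longrightarrow> P t \<bullet> v = 0" "P \<in> borel_measurable borel"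
    "(\<integral>\<^sup>+t. ennreal (norm (P t) powr p * std_gaussian_density t) \<partial>lborel) = ennreal (chi_c (CARD('d) - dim V) p)"
proof -
  define W where "W = orthogonal_comp V"
  have sW: "subspace W" unfolding W_def by (rule subspace_orthogonal_comp)
  have "dim {y \<in> UNIV. \<forall>x\<in>V. orthogonal x y} + dim V = dim (UNIV :: (real^'d) set)"
    by (rule dim_subspace_orthogonal_to_vectors[OF V subspace_UNIV subset_UNIV])
  moreover have "{y \<in> UNIV. \<forall>x\<in>V. orthogonal x y} = W" unfolding W_def orthogonal_comp_def by auto
  ultimately have dW: "dim W = CARD('d) - dim V" by simp
  obtain B1 where B1: "B1 \<subseteq> V" "pairwise orthogonal B1" "\<And>x. x \<in> B1 \<Longrightarrow> norm x = 1"
      "independent B1" "card B1 = dim V" "span B1 = V"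
    using orthonormal_basis_subspace[OF V] by metis
  obtain B2 where B2: "B2 \<subseteq> W" "pairwise orthogonal B2" "\<And>x. x \<in> B2 \<Longrightarrow> norm x = 1"
      "independent B2" "card B2 = dim W" "span B2 = W"
    using orthonormal_basis_subspace[OF sW] by metis
  have fB1: "finite B1" and fB2: "finite B2" using B1(4) B2(4) by (auto intro: independent_imp_finite)
  have VW: "x \<bullet> y = 0" if "x \<in> V" "y \<in> W" for x y
    using that unfolding W_def orthogonal_comp_def real_inner_class.orthogonal_def by auto
  have B12: "B1 \<inter> B2 = {}"
  proof (rule ccontr)
    assume "B1 \<inter> B2 \<noteq> {}"
    then obtain x where "x \<in> B1" "x \<in> B2" by auto
    then have "x \<bullet> x = 0" using VW B1(1) B2(1) by blast
    moreover have "norm x = 1" using B1(3) \<open>x \<in> B1\<close> by blast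
    ultimately show False by (simp add: norm_eq_1)
  qed
  have cB2: "card B2 \<le> CARD('d)" using B2(5) dW by simp
  obtain J :: "'d set" where J: "card J = card B2" "finite J"
    using obtain_subset_with_card_n[OF cB2] by metis
  have cJc: "card (UNIV - J) = card B1"
    using J B1(5) B2(5) dW dV by (simp add: card_Diff_subset)
  obtain e1 where e1: "bij_betw e1 J B2" using finite_same_card_bij[OF J(2) fB2 J(1)] by blast
  obtain e2 where e2: "bij_betw e2 (UNIV - J) B1" using finite_same_card_bij[OF _ fB1 cJc] by auto
  define e where "e = (\<lambda>j. if j \<in> J then e1 j else e2 j)"
  have eJ: "bij_betw e J B2" using e1 unfolding e_def by (rule bij_betw_cong[THEN iffD1, rotated]) auto
  have eC: "bij_betw e (UNIV - J) B1" using e2 unfolding e_def by (rule bij_betw_cong[THEN iffD1, rotated]) auto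
  have eB: "bij_betw e (J \<union> (UNIV - J)) (B2 \<union> B1)"
    by (rule bij_betw_combine[OF eJ eC]) (use B12 in auto)
  then have inje: "inj e" and ran_e: "range e = B1 \<union> B2" by (auto simp: bij_betw_def)
  have e_norm: "e j \<bullet> e j = 1" for j
  proof -
    have "e j \<in> B1 \<union> B2" using ran_e by auto
    then have "norm (e j) = 1" using B1(3) B2(3) by auto
    then show ?thesis by (simp add: norm_eq_1)
  qed
  have e_orth: "e j \<bullet> e k = 0" if "j \<noteq> k" for j k
  proof -
    have ne: "e j \<noteq> e k" using inje that by (auto dest: injD)
    have ej: "e j \<in> B1 \<union> B2" and ek: "e k \<in> B1 \<union> B2" using ran_e by auto
    show ?thesis
    proof (cases "e j \<in> B1")
      case True
      show ?thesis
      proof (cases "e k \<in> B1")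
        case True
        then show ?thesis using B1(2) \<open>e j \<in> B1\<close> ne by (auto simp: pairwise_def real_inner_class.orthogonal_def)
      next
        case False
        then have "e k \<in> B2" using ek by auto
        then show ?thesis using VW B1(1) B2(1) \<open>e j \<in> B1\<close> by auto
      qed
    next
      case False
      then have j2: "e j \<in> B2" using ej by auto
      show ?thesis
      proof (cases "e k \<in> B1")
        case True
        then have "e k \<bullet> e j = 0" using VW B1(1) B2(1) j2 by blast
        then show ?thesis by (simp add: inner_commute)
      next
        case False
        then have "e k \<in> B2" using ek by auto
        then show ?thesis using B2(2) j2 ne by (auto simp: pairwise_def real_inner_class.orthogonal_def)
      qed
    qed
  qed
  have e_inner: "e j \<bullet> e k = (if j = k then 1 else 0)" for j k
    using e_norm e_orth by auto
  define T where "T = (\<lambda>x::real^'d. \<Sum>j\<in>UNIV. (x $ j) *\<^sub>R e j)"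
  have T_inner: "T x \<bullet> e k = x $ k" for x k
  proof -
    have "T x \<bullet> e k = (\<Sum>j\<in>UNIV. (x $ j) * (e j \<bullet> e k))"
      unfolding T_def by (simp add: inner_sum_left)
    also have "\<dots> = (\<Sum>j\<in>UNIV. if j = k then x $ k else 0)"
      by (intro sum.cong) (auto simp: e_inner)
    finally show ?thesis by simp
  qed
  have linT: "linear T"
    unfolding T_def by (rule linearI) (simp_all add: scaleR_add_left sum.distrib scaleR_sum_right)
  have normT: "norm (T x) = norm x" for x
  proof -
    have "T x \<bullet> T x = (\<Sum>j\<in>UNIV. (x $ j) * (e j \<bullet> T x))"
      by (subst (1) T_def) (simp add: inner_sum_left)
    also have "\<dots> = (\<Sum>j\<in>UNIV. (x $ j)^2)"
      by (simp add: inner_commute[of "e _"] T_inner power2_eq_square)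
    finally have "(norm (T x))^2 = (norm x)^2" by (simp only: power2_norm_eq_inner[symmetric] norm_sq_vec)
    then show ?thesis by (simp add: power2_eq_iff_nonneg)
  qed
  have oT: "orthogonal_transformation T" unfolding orthogonal_transformation using linT normT by simp
  define P where "P = (\<lambda>t. \<Sum>b\<in>B2. (t \<bullet> b) *\<^sub>R b)"
  have PW: "P t \<in> W" for t
  proof -
    have "P t \<in> span B2" unfolding P_def by (intro span_sum span_scale span_base) auto
    then show ?thesis using B2(6) by simp
  qed
  have Porth: "P t \<bullet> v = 0" if "v \<in> V" for t v using VW[OF that PW] by (simp add: inner_commute)
  have Pb: "P t \<bullet> b = t \<bullet> b" if b: "b \<in> B2" for t b
  proof -
    have bb: "b' \<bullet> b = (if b' = b then 1 else 0)" if "b' \<in> B2" for b'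
    proof (cases "b' = b")
      case True then show ?thesis using B2(3) b by (simp add: norm_eq_1)
    next
      case False then show ?thesis using B2(2) b that by (auto simp: pairwise_def real_inner_class.orthogonal_def)
    qed
    have "P t \<bullet> b = (\<Sum>b'\<in>B2. (t \<bullet> b') * (b' \<bullet> b))" unfolding P_def by (simp add: inner_sum_left)
    also have "\<dots> = (\<Sum>b'\<in>B2. if b' = b then t \<bullet> b else 0)"
      by (intro sum.cong) (auto simp: bb)
    finally show ?thesis using b fB2 by simp
  qed
  have Pres: "t - P t \<in> V" for t
  proof -
    have "t - P t \<in> orthogonal_comp W"
      unfolding orthogonal_comp_def
    proof (safe)
      fix w assume "w \<in> W"
      then have "w \<in> span B2" using B2(6) by simp
      then have "orthogonal (t - P t) w"
        by (rule orthogonal_to_span) (auto simp: real_inner_class.orthogonal_def inner_diff_left Pb)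
      then show "orthogonal w (t - P t)" by (simp add: orthogonal_commute)
    qed
    then show ?thesis unfolding W_def using orthogonal_comp_self[OF V] by simp
  qed
  have PT: "P (T x) = (\<Sum>k\<in>J. (x $ k) *\<^sub>R e k)" for x
  proof -
    have "P (T x) = (\<Sum>k\<in>J. (T x \<bullet> e k) *\<^sub>R e k)"
      unfolding P_def using eJ by (subst sum.reindex_bij_betw[OF eJ, symmetric]) simp
    then show ?thesis by (simp add: T_inner)
  qed
  have normPT: "(norm (P (T x)))^2 = (\<Sum>k\<in>J. (x $ k)^2)" for x
  proof -
    have "P (T x) \<bullet> P (T x) = (\<Sum>k\<in>J. (x $ k) * (e k \<bullet> P (T x)))"
      by (subst (1) PT) (simp add: inner_sum_left)
    also have "\<dots> = (\<Sum>k\<in>J. (x $ k)^2)"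
    proof (intro sum.cong refl)
      fix k assume k: "k \<in> J"
      have "e k \<bullet> P (T x) = (\<Sum>k'\<in>J. (x $ k') * (e k \<bullet> e k'))"
        unfolding PT by (simp add: inner_sum_right)
      also have "\<dots> = (\<Sum>k'\<in>J. if k' = k then x $ k else 0)"
        by (intro sum.cong) (auto simp: e_inner)
      also have "\<dots> = x $ k" using k J(2) by simp
      finally show "(x $ k) * (e k \<bullet> P (T x)) = (x $ k)^2" by (simp add: power2_eq_square)
    qed
    finally show ?thesis by (simp add: power2_norm_eq_inner)
  qed
  have Jne: "J \<noteq> {}" using J(1) B2(5) dW dV by auto
  have Pm[measurable]: "P \<in> borel_measurable borel"
    unfolding P_def by (intro borel_measurable_continuous_onI continuous_intros)
  have "(\<integral>\<^sup>+t. ennreal (norm (P t) powr p * std_gaussian_density t) \<partial>lborel)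
      = (\<integral>\<^sup>+t. ennreal (norm (P t) powr p) * ennreal (std_gaussian_density t) \<partial>lborel)"
    by (intro nn_integral_cong) (simp add: ennreal_mult')
  also have "\<dots> = (\<integral>\<^sup>+x. ennreal (norm (P (T x)) powr p) * ennreal (std_gaussian_density x) \<partial>lborel)"
    by (rule gauss_orth[OF oT, symmetric]) measurable
  also have "\<dots> = (\<integral>\<^sup>+x. ennreal ((\<Sum>k\<in>J. (x $ k)^2) powr (p/2) * std_gaussian_density x) \<partial>lborel)"
  proof (intro nn_integral_cong)
    fix x :: "real^'d"
    have "norm (P (T x)) powr p = ((norm (P (T x)))^2) powr (p/2)"
      by (rule powr_sq_half) simp
    also have "\<dots> = (\<Sum>k\<in>J. (x $ k)^2) powr (p/2)" by (simp add: normPT)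
    finally show "ennreal (norm (P (T x)) powr p) * ennreal (std_gaussian_density x)
        = ennreal ((\<Sum>k\<in>J. (x $ k)^2) powr (p/2) * std_gaussian_density x)"
      by (simp add: ennreal_mult')
  qed
  also have "\<dots> = ennreal (chi_c (card J) p)" by (rule G_red[OF Jne p])
  also have "card J = CARD('d) - dim V" using J(1) B2(5) dW by simp
  finally show ?thesis using that Pres Porth Pm by blast
qed




lemma gram_det_meas:
  assumes "\<And>a. a < j \<Longrightarrow> (\<lambda>\<omega>. Z \<omega> a) \<in> borel_measurable M"
  shows "(\<lambda>\<omega>. gram_det j (Z \<omega>)) \<in> borel_measurable M"
  unfolding gram_det_def
proof (intro borel_measurable_sum borel_measurable_times borel_measurable_const borel_measurable_prod borel_measurable_inner)
  fix p a assume p: "p \<in> {p. p permutes {..<j}}" and a: "a \<in> {..<j}"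
  then have "p a < j" using permutes_in_image[of p "{..<j}" a] by auto
  then show "(\<lambda>\<omega>. Z \<omega> (p a)) \<in> borel_measurable M" by (rule assms)
  show "(\<lambda>\<omega>. Z \<omega> a) \<in> borel_measurable M" using a by (intro assms) auto
qed

lemma one_step:
  fixes y :: "nat \<Rightarrow> real^'d" and p :: real
  assumes l: "l < CARD('d)" and p: "p \<ge> 0"
  shows "(\<integral>\<^sup>+t. ennreal (gram_det (Suc l) (vcons t y) powr (p/2) * std_gaussian_density t) \<partial>lborel)
       = ennreal (chi_c (CARD('d) - l) p) * ennreal (gram_det l y powr (p/2))"
proof (cases "gram_det l y = 0")
  case True
  have "gram_det (Suc l) (vcons t y) = 0" for t
  proof -
    obtain w where w: "t - w \<in> span (y ` {..<l})" "\<And>i. i < l \<Longrightarrow> w \<bullet> y i = 0"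
      using orth_decomp by blast
    show ?thesis using gram_rec[OF w] True by simp
  qed
  then show ?thesis using True by simp
next
  case False
  then have Gpos: "gram_det l y > 0" using gram_nonneg[of l y] by linarith
  define V where "V = span (y ` {..<l})"
  have sV: "subspace V" unfolding V_def by simp
  have dV: "dim V = l" unfolding V_def using gram_pos_dim[OF Gpos] by (simp add: dim_span)
  obtain P where P: "\<And>t. t - P t \<in> V" "\<And>t v. v \<in> V \<Longrightarrow> P t \<bullet> v = 0" "P \<in> borel_measurable borel"
    "(\<integral>\<^sup>+t. ennreal (norm (P t) powr p * std_gaussian_density t) \<partial>lborel) = ennreal (chi_c (CARD('d) - dim V) p)"
  proof -
    have "dim V < CARD('d)" using dV l by simp
    from perp_moment[OF sV this p] obtain P where
      "\<And>t. t - P t \<in> V" "\<And>t v. v \<in> V \<Longrightarrow> P t \<bullet> v = 0" "P \<in> borel_measurable borel"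
      "(\<integral>\<^sup>+t. ennreal (norm (P t) powr p * std_gaussian_density t) \<partial>lborel) = ennreal (chi_c (CARD('d) - dim V) p)"
      by blast
    then show ?thesis using that by blast
  qed
  have Pm[measurable]: "P \<in> borel_measurable borel" by (rule P(3))
  have G: "gram_det (Suc l) (vcons t y) = (P t \<bullet> P t) * gram_det l y" for t
  proof (rule gram_rec)
    show "t - P t \<in> span (y ` {..<l})" using P(1) unfolding V_def .
    fix i assume "i < l"
    then have "y i \<in> V" unfolding V_def by (auto intro: span_base)
    then show "P t \<bullet> y i = 0" by (rule P(2))
  qed
  have "(\<integral>\<^sup>+t. ennreal (gram_det (Suc l) (vcons t y) powr (p/2) * std_gaussian_density t) \<partial>lborel)
      = (\<integral>\<^sup>+t. ennreal (gram_det l y powr (p/2)) * ennreal (norm (P t) powr p * std_gaussian_density t) \<partial>lborel)"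
  proof (rule nn_integral_cong)
    fix t
    have "gram_det (Suc l) (vcons t y) powr (p/2) = ((norm (P t))^2) powr (p/2) * gram_det l y powr (p/2)"
    proof -
      have "(P t \<bullet> P t) = (norm (P t))^2" by (simp add: power2_norm_eq_inner)
      then show ?thesis unfolding G by (simp only:) (rule powr_mult; simp add: Gpos less_imp_le)
    qed
    also have "((norm (P t))^2) powr (p/2) = norm (P t) powr p"
      by (rule powr_sq_half[symmetric]) simp
    finally have eqt: "gram_det (Suc l) (vcons t y) powr (p/2) = norm (P t) powr p * gram_det l y powr (p/2)" .
    show "ennreal (gram_det (Suc l) (vcons t y) powr (p/2) * std_gaussian_density t)
        = ennreal (gram_det l y powr (p/2)) * ennreal (norm (P t) powr p * std_gaussian_density t)"
    proof -
      have "0 \<le> norm (P t) powr p * std_gaussian_density t" by (simp add: gd_nonneg)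
      then show ?thesis unfolding eqt by (simp add: ennreal_mult'' mult_ac)
    qed
  qed
  also have "\<dots> = ennreal (gram_det l y powr (p/2)) * (\<integral>\<^sup>+t. ennreal (norm (P t) powr p * std_gaussian_density t) \<partial>lborel)"
    by (rule nn_integral_cmult) measurable
  also have "\<dots> = ennreal (chi_c (CARD('d) - l) p) * ennreal (gram_det l y powr (p/2))"
    using P(4) dV by (simp add: mult.commute)
  finally show ?thesis .
qed

definition gauss :: "(real^'d) measure" where
  "gauss = density lborel (\<lambda>x. ennreal (std_gaussian_density x))"

lemma sets_gauss[measurable_cong, simp]: "sets gauss = sets borel"
  by (simp add: gauss_def)

lemma gauss_prob: "prob_space (gauss :: (real^'d) measure)"
proof
  have "emeasure (gauss :: (real^'d) measure) (space gauss) = (\<integral>\<^sup>+x. ennreal (std_gaussian_density (x::real^'d)) \<partial>lborel)"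
    by (simp add: gauss_def emeasure_density)
  also have "\<dots> = (\<integral>\<^sup>+x. (\<Prod>b\<in>Basis. ennreal (std_normal_density ((x::real^'d) \<bullet> b))) \<partial>lborel)"
  proof (rule nn_integral_cong)
    fix x :: "real^'d"
    have "std_gaussian_density x = (\<Prod>b\<in>Basis. std_normal_density (x \<bullet> b))"
      unfolding std_gaussian_density_def Basis_vec_range
      by (subst prod.reindex[OF inj_axis1]) (simp add: cart_eq_inner_axis)
    then show "ennreal (std_gaussian_density x) = (\<Prod>b\<in>Basis. ennreal (std_normal_density (x \<bullet> b)))"
      by (simp add: prod_ennreal normal_density_nonneg)
  qed
  also have "\<dots> = (\<Prod>b\<in>(Basis::(real^'d) set). (\<integral>\<^sup>+y. ennreal (std_normal_density y) \<partial>lborel))"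
    by (rule nn_integral_lborel_prod) auto
  also have "\<dots> = 1" by (simp add: std_normal_int1)
  finally show "emeasure (gauss :: (real^'d) measure) (space gauss) = 1" .
qed

lemma psf_gauss: "product_sigma_finite (\<lambda>_::nat. gauss :: (real^'d) measure)"
  unfolding product_sigma_finite_def
  using prob_space_imp_sigma_finite[OF gauss_prob] by simp

lemma comb_meas:
  "(\<lambda>x. ennreal (gram_det n (\<lambda>a. if a < k then x a else y (a - k)) powr q))
     \<in> borel_measurable (PiM {..<k} (\<lambda>_. gauss :: (real^'d) measure))"
proof -
  have "(\<lambda>x. gram_det n (\<lambda>a. if a < k then x a else (y (a - k) :: real^'d)))
     \<in> borel_measurable (PiM {..<k} (\<lambda>_. gauss :: (real^'d) measure))"
  proof (rule gram_det_meas)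
    fix a
    show "(\<lambda>x. if a < k then x a else y (a - k)) \<in> borel_measurable (PiM {..<k} (\<lambda>_. gauss :: (real^'d) measure))"
    proof (cases "a < k")
      case True
      have "(\<lambda>x. x a) \<in> measurable (PiM {..<k} (\<lambda>_. gauss :: (real^'d) measure)) gauss"
        using True by (intro measurable_component_singleton) auto
      then have "(\<lambda>x. x a) \<in> borel_measurable (PiM {..<k} (\<lambda>_. gauss :: (real^'d) measure))"
        by (simp cong: measurable_cong_sets)
      then show ?thesis using True by simp
    qed simp
  qed
  then show ?thesis by measurable
qed

lemma chi_c_nonneg: "n > 0 \<Longrightarrow> p \<ge> 0 \<Longrightarrow> chi_c n p \<ge> 0"
  unfolding chi_c_def
  by (intro divide_nonneg_nonneg mult_nonneg_nonneg less_imp_le[OF Gamma_real_pos]) auto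

lemma key:
  fixes y :: "nat \<Rightarrow> real^'d" and p :: real
  assumes p: "p \<ge> 0"
  shows "k + l \<le> CARD('d) \<Longrightarrow>
    (\<integral>\<^sup>+x. ennreal (gram_det (k + l) (\<lambda>a. if a < k then x a else y (a - k)) powr (p/2)) \<partial>PiM {..<k} (\<lambda>_. gauss))
      = ennreal (\<Prod>i\<in>{CARD('d) - l - k + 1..CARD('d) - l}. chi_c i p) * ennreal (gram_det l y powr (p/2))"
proof (induction k arbitrary: l y)
  case 0
  interpret P: product_sigma_finite "\<lambda>_::nat. gauss :: (real^'d) measure" by (rule psf_gauss)
  have e: "(\<lambda>a. if a < 0 then x a else y (a - 0)) = y" for x :: "nat \<Rightarrow> real^'d" by auto
  show ?case by (simp add: e space_PiM_empty)
next
  case (Suc k)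
  interpret P: product_sigma_finite "\<lambda>_::nat. gauss :: (real^'d) measure" by (rule psf_gauss)
  let ?d = "CARD('d)"
  have kl: "k + Suc l \<le> ?d" using Suc.prems by simp
  have fe: "(\<lambda>a. if a < Suc k then (x(k := t)) a else y (a - Suc k)) = (\<lambda>a. if a < k then x a else vcons t y (a - k))"
    for x :: "nat \<Rightarrow> real^'d" and t
    by (auto simp: vcons_def fun_eq_iff)
  define C where "C = (\<Prod>i\<in>{?d - Suc l - k + 1..?d - Suc l}. chi_c i p)"
  have "(\<integral>\<^sup>+x. ennreal (gram_det (Suc k + l) (\<lambda>a. if a < Suc k then x a else y (a - Suc k)) powr (p/2)) \<partial>PiM {..<Suc k} (\<lambda>_. gauss))
      = (\<integral>\<^sup>+t. (\<integral>\<^sup>+x. ennreal (gram_det (Suc k + l) (\<lambda>a. if a < Suc k then (x(k := t)) a else y (a - Suc k)) powr (p/2)) \<partial>PiM {..<k} (\<lambda>_. gauss)) \<partial>gauss)"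
    unfolding lessThan_Suc
    by (rule P.product_nn_integral_insert_rev) (auto simp: comb_meas[of _ "Suc k", unfolded lessThan_Suc])
  also have "\<dots> = (\<integral>\<^sup>+t. ennreal C * ennreal (gram_det (Suc l) (vcons t y) powr (p/2)) \<partial>gauss)"
  proof (rule nn_integral_cong)
    fix t :: "real^'d"
    have "(\<integral>\<^sup>+x. ennreal (gram_det (Suc k + l) (\<lambda>a. if a < Suc k then (x(k := t)) a else y (a - Suc k)) powr (p/2)) \<partial>PiM {..<k} (\<lambda>_. gauss))
        = (\<integral>\<^sup>+x. ennreal (gram_det (k + Suc l) (\<lambda>a. if a < k then x a else vcons t y (a - k)) powr (p/2)) \<partial>PiM {..<k} (\<lambda>_. gauss))"
      unfolding fe by simp
    also have "\<dots> = ennreal C * ennreal (gram_det (Suc l) (vcons t y) powr (p/2))"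
      unfolding C_def by (rule Suc.IH[OF kl])
    finally show "(\<integral>\<^sup>+x. ennreal (gram_det (Suc k + l) (\<lambda>a. if a < Suc k then (x(k := t)) a else y (a - Suc k)) powr (p/2)) \<partial>PiM {..<k} (\<lambda>_. gauss))
        = ennreal C * ennreal (gram_det (Suc l) (vcons t y) powr (p/2))" .
  qed
  also have "\<dots> = ennreal C * (\<integral>\<^sup>+t. ennreal (gram_det (Suc l) (vcons t y) powr (p/2)) \<partial>gauss)"
  proof (rule nn_integral_cmult)
    have "(\<lambda>t. gram_det (Suc l) (vcons t y)) \<in> borel_measurable (gauss :: (real^'d) measure)"
      by (rule gram_det_meas) (auto simp: vcons_def)
    then show "(\<lambda>t. ennreal (gram_det (Suc l) (vcons t y) powr (p/2))) \<in> borel_measurable gauss"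
      by measurable
  qed
  also have "(\<integral>\<^sup>+t. ennreal (gram_det (Suc l) (vcons t y) powr (p/2)) \<partial>gauss)
      = (\<integral>\<^sup>+t. ennreal (gram_det (Suc l) (vcons t y) powr (p/2) * std_gaussian_density t) \<partial>lborel)"
  proof -
    have m: "(\<lambda>t. gram_det (Suc l) (vcons t y)) \<in> borel_measurable (borel :: (real^'d) measure)"
      by (rule gram_det_meas) (auto simp: vcons_def)
    show ?thesis unfolding gauss_def
      by (subst nn_integral_density) (use m in \<open>auto intro!: nn_integral_cong simp: ennreal_mult'' gd_nonneg mult.commute\<close>)
  qed
  also have "\<dots> = ennreal (chi_c (?d - l) p) * ennreal (gram_det l y powr (p/2))"
    by (rule one_step) (use Suc.prems p in auto)
  also have "ennreal C * (ennreal (chi_c (?d - l) p) * ennreal (gram_det l y powr (p/2)))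
      = ennreal (\<Prod>i\<in>{?d - l - Suc k + 1..?d - l}. chi_c i p) * ennreal (gram_det l y powr (p/2))"
  proof -
    have C0: "C \<ge> 0" unfolding C_def using p by (intro prod_nonneg chi_c_nonneg) auto
    have set: "{?d - l - Suc k + 1..?d - l} = insert (?d - l) {?d - Suc l - k + 1..?d - Suc l}"
      using Suc.prems by (auto)
    have "(\<Prod>i\<in>{?d - l - Suc k + 1..?d - l}. chi_c i p) = chi_c (?d - l) p * C"
      unfolding set C_def by (subst prod.insert) auto
    then show ?thesis using C0 by (simp add: ennreal_mult' mult_ac)
  qed
  finally show ?case .
qed




lemma sv_powr:
  "simplex_vol j Z powr p = gram_det j Z powr (p/2) / fact j powr p"
proof -
  have G: "gram_det j Z \<ge> 0" by (rule gram_nonneg)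
  have "simplex_vol j Z powr p = sqrt (gram_det j Z) powr p / fact j powr p"
    unfolding simplex_vol_def by (rule powr_divide)
  also have "sqrt (gram_det j Z) powr p = gram_det j Z powr (p/2)"
    using G by (simp add: powr_half_sqrt[symmetric] powr_powr)
  finally show ?thesis .
qed

lemma const_eq:
  fixes p :: real
  assumes kl: "k + l \<le> d" and p: "p \<ge> 0"
  shows "1 / fact (k + l) powr p * (\<Prod>i\<in>{d - l - k + 1..d - l}. chi_c i p)
     = ((2 powr (real k / 2) * fact l) / fact (k + l)) powr p
         * (\<Prod>i\<in>{d - l - k + 1..d - l}. Gamma ((real i + p) / 2) / Gamma (real i / 2))
       * (1 / fact l powr p)"
proof -
  let ?R = "{d - l - k + 1..d - l}"
  have cR: "card ?R = k" using kl by simp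
  have "(\<Prod>i\<in>?R. chi_c i p) = (\<Prod>i\<in>?R. 2 powr (p/2) * (Gamma ((real i + p) / 2) / Gamma (real i / 2)))"
    unfolding chi_c_def by (simp add: mult.assoc)
  also have "\<dots> = (2 powr (p/2)) ^ k * (\<Prod>i\<in>?R. Gamma ((real i + p) / 2) / Gamma (real i / 2))"
    by (subst prod.distrib) (simp only: prod_constant cR)
  also have "(2 powr (p/2)) ^ k = 2 powr (real k / 2 * p)"
    by (simp add: powr_power mult_ac)
  finally have P: "(\<Prod>i\<in>?R. chi_c i p) = 2 powr (real k / 2 * p) * (\<Prod>i\<in>?R. Gamma ((real i + p) / 2) / Gamma (real i / 2))" .
  have C: "((2 powr (real k / 2) * fact l) / fact (k + l)) powr p
      = 2 powr (real k / 2 * p) * fact l powr p / fact (k + l) powr p"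
    by (simp add: powr_divide powr_mult powr_powr)
  have fl: "fact l powr p > (0::real)" by simp
  show ?thesis unfolding P C using fl by (simp add: field_simps)
qed

lemma distr_X_gauss:
  fixes k :: nat and X :: "nat \<Rightarrow> 'w \<Rightarrow> real^'d" and M :: "'w measure"
  assumes "prob_space M"
    and X: "\<And>i. i < k \<Longrightarrow> distributed M lborel (X i) (\<lambda>x. ennreal (std_gaussian_density x))"
    and ind: "prob_space.indep_vars M (\<lambda>_. borel) X {..<k}"
  shows "distr M (PiM {..<k} (\<lambda>_. borel)) (\<lambda>\<omega>. restrict (\<lambda>i. X i \<omega>) {..<k})
       = PiM {..<k} (\<lambda>_. gauss :: (real^'d) measure)"
proof -
  interpret M: prob_space M by fact
  have dX: "distr M borel (X i) = gauss" if "i < k" for i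
  proof -
    have "distr M lborel (X i) = density lborel (\<lambda>x. ennreal (std_gaussian_density x))"
      using X[OF that] by (simp add: distributed_def)
    moreover have "distr M borel (X i) = distr M lborel (X i)"
      by (rule distr_cong) auto
    ultimately show ?thesis by (simp add: gauss_def)
  qed
  have rv: "X i \<in> measurable M borel" if "i \<in> {..<k}" for i
  proof -
    have "X i \<in> measurable M lborel" using X that by (simp add: distributed_def)
    then show ?thesis by (simp cong: measurable_cong_sets)
  qed
  show ?thesis
  proof (cases "k = 0")
    case True
    show ?thesis
    proof (rule measure_eqI)
      show "sets (distr M (PiM {..<k} (\<lambda>_. borel)) (\<lambda>\<omega>. restrict (\<lambda>i. X i \<omega>) {..<k})) = sets (PiM {..<k} (\<lambda>_. gauss :: (real^'d) measure))"
        using True by (simp add: sets_PiM_empty)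
      fix A assume "A \<in> sets (distr M (PiM {..<k} (\<lambda>_. borel)) (\<lambda>\<omega>. restrict (\<lambda>i. X i \<omega>) {..<k}))"
      then have A: "A = {} \<or> A = {\<lambda>_. undefined}" using True by (simp add: sets_PiM_empty)
      have m: "(\<lambda>\<omega>. restrict (\<lambda>i. X i \<omega>) {..<k}) \<in> measurable M (PiM {..<k} (\<lambda>_. borel :: (real^'d) measure))"
        using True by (simp add: measurable_def space_PiM_empty sets_PiM_empty restrict_def Pi_iff vimage_def)
      have vim: "(\<lambda>\<omega>. restrict (\<lambda>i. X i \<omega>) {..<k}) -` {\<lambda>_. undefined} \<inter> space M = space M"
        using True by auto
      show "emeasure (distr M (PiM {..<k} (\<lambda>_. borel)) (\<lambda>\<omega>. restrict (\<lambda>i. X i \<omega>) {..<k})) A = emeasure (PiM {..<k} (\<lambda>_. gauss :: (real^'d) measure)) A"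
        using A
      proof
        assume "A = {\<lambda>_. undefined}"
        have "emeasure (distr M (PiM {..<k} (\<lambda>_. borel)) (\<lambda>\<omega>. restrict (\<lambda>i. X i \<omega>) {..<k})) {\<lambda>_. undefined}
            = emeasure M ((\<lambda>\<omega>. restrict (\<lambda>i. X i \<omega>) {..<k}) -` {\<lambda>_. undefined} \<inter> space M)"
          by (rule emeasure_distr[OF m]) (use True in \<open>simp add: sets_PiM_empty\<close>)
        also have "\<dots> = 1" unfolding vim by (rule M.emeasure_space_1)
        finally show ?thesis using \<open>A = _\<close> True by simp
      qed simp
    qed
  next
    case False
    have "distr M (PiM {..<k} (\<lambda>_. borel)) (\<lambda>\<omega>. restrict (\<lambda>i. X i \<omega>) {..<k})
        = PiM {..<k} (\<lambda>i. distr M borel (X i))"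
      using M.indep_vars_iff_distr_eq_PiM'[where I="{..<k}" and M'="\<lambda>_. borel" and X=X] False rv ind by auto
    also have "\<dots> = PiM {..<k} (\<lambda>_. gauss)"
      by (rule PiM_cong) (auto simp: dX)
    finally show ?thesis .
  qed
qed

lemma H_meas:
  "(\<lambda>z. ennreal (gram_det (k + l) (\<lambda>a. if a < k then fst z a else snd z (a - k)) powr q))
     \<in> borel_measurable (PiM {..<k} (\<lambda>_. borel :: (real^'d) measure) \<Otimes>\<^sub>M PiM {..<l} (\<lambda>_. borel :: (real^'d) measure))"
proof -
  have "(\<lambda>z. gram_det (k + l) (\<lambda>a. if a < k then fst z a else (snd z (a - k) :: real^'d)))
     \<in> borel_measurable (PiM {..<k} (\<lambda>_. borel :: (real^'d) measure) \<Otimes>\<^sub>M PiM {..<l} (\<lambda>_. borel :: (real^'d) measure))"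
  proof (rule gram_det_meas)
    fix a assume a: "a < k + l"
    show "(\<lambda>z. if a < k then fst z a else snd z (a - k)) \<in> borel_measurable (PiM {..<k} (\<lambda>_. borel :: (real^'d) measure) \<Otimes>\<^sub>M PiM {..<l} (\<lambda>_. borel :: (real^'d) measure))"
    proof (cases "a < k")
      case True
      have "(\<lambda>z. fst z a) \<in> borel_measurable (PiM {..<k} (\<lambda>_. borel :: (real^'d) measure) \<Otimes>\<^sub>M PiM {..<l} (\<lambda>_. borel :: (real^'d) measure))"
        using True by (intro measurable_compose[OF measurable_fst measurable_component_singleton]) auto
      then show ?thesis using True by simp
    next
      case False
      have "(\<lambda>z. snd z (a - k)) \<in> borel_measurable (PiM {..<k} (\<lambda>_. borel :: (real^'d) measure) \<Otimes>\<^sub>M PiM {..<l} (\<lambda>_. borel :: (real^'d) measure))"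
        using False a by (intro measurable_compose[OF measurable_snd measurable_component_singleton]) auto
      then show ?thesis using False by simp
    qed
  qed
  then show ?thesis by measurable
qed

lemma Y_meas:
  "(\<lambda>y. ennreal (gram_det l y powr q)) \<in> borel_measurable (PiM {..<l} (\<lambda>_. borel :: (real^'d) measure))"
proof -
  have "(\<lambda>y. gram_det l y) \<in> borel_measurable (PiM {..<l} (\<lambda>_. borel :: (real^'d) measure))"
    by (rule gram_det_meas) (auto intro: measurable_component_singleton)
  then show ?thesis by measurable
qed

theorem mainTheorem13:
  fixes M :: "'w measure"
    and X Y :: "nat \<Rightarrow> 'w \<Rightarrow> real ^ 'd"
    and k l :: nat and p :: real
  assumes "prob_space M"
    and "k + l \<le> CARD('d)"
    and "\<And>i. i < k \<Longrightarrow> distributed M lborel (X i) (\<lambda>x. ennreal (std_gaussian_density x))"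
    and "prob_space.indep_vars M (\<lambda>_. borel) X {..<k}"
    and "\<And>j. j < l \<Longrightarrow> Y j \<in> borel_measurable M"
    and "prob_space.indep_var M
           (PiM {..<k} (\<lambda>_. borel)) (\<lambda>\<omega>. restrict (\<lambda>i. X i \<omega>) {..<k})
           (PiM {..<l} (\<lambda>_. borel)) (\<lambda>\<omega>. restrict (\<lambda>j. Y j \<omega>) {..<l})"
    and "p > 0"
  shows "(\<integral>\<^sup>+ \<omega>. ennreal (simplex_vol (k + l)
              (\<lambda>a. if a < k then X a \<omega> else Y (a - k) \<omega>) powr p) \<partial>M)
         = ennreal (((2 powr (real k / 2) * fact l) / fact (k + l)) powr p
              * (\<Prod>i\<in>{CARD('d) - l - k + 1 .. CARD('d) - l}.
                   Gamma ((real i + p) / 2) / Gamma (real i / 2)))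
           * (\<integral>\<^sup>+ \<omega>. ennreal (simplex_vol l (\<lambda>a. Y a \<omega>) powr p) \<partial>M)"
proof -
  interpret M: prob_space M by fact
  let ?d = "CARD('d)"
  define Xt where "Xt = (\<lambda>\<omega>. restrict (\<lambda>i. X i \<omega>) {..<k})"
  define Yt where "Yt = (\<lambda>\<omega>. restrict (\<lambda>j. Y j \<omega>) {..<l})"
  define S where "S = PiM {..<k} (\<lambda>_. borel :: (real^'d) measure)"
  define T where "T = PiM {..<l} (\<lambda>_. borel :: (real^'d) measure)"
  have p0: "p \<ge> 0" using assms(7) by simp
  have ind: "M.indep_var S Xt T Yt" using assms(6) by (simp add: S_def T_def Xt_def Yt_def)
  then have rvX: "Xt \<in> measurable M S" and rvY: "Yt \<in> measurable M T"
    and joint: "distr M S Xt \<Otimes>\<^sub>M distr M T Yt = distr M (S \<Otimes>\<^sub>M T) (\<lambda>\<omega>. (Xt \<omega>, Yt \<omega>))"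
    using M.indep_var_distribution_eq by auto
  have dX: "distr M S Xt = PiM {..<k} (\<lambda>_. gauss)"
    using distr_X_gauss[OF assms(1) assms(3) assms(4)] by (simp add: S_def Xt_def)
  define PY where "PY = distr M T Yt"
  define H where "H = (\<lambda>z::(nat \<Rightarrow> real^'d) \<times> (nat \<Rightarrow> real^'d).
      ennreal (gram_det (k + l) (\<lambda>a. if a < k then fst z a else snd z (a - k)) powr (p/2)))"
  have Hm: "H \<in> borel_measurable (S \<Otimes>\<^sub>M T)"
    unfolding H_def S_def T_def by (rule H_meas)
  have XYm: "(\<lambda>\<omega>. (Xt \<omega>, Yt \<omega>)) \<in> measurable M (S \<Otimes>\<^sub>M T)"
    using rvX rvY by (rule measurable_Pair)
  define c where "c = (\<Prod>i\<in>{?d - l - k + 1..?d - l}. chi_c i p)"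
  define I where "I = (\<integral>\<^sup>+\<omega>. ennreal (gram_det l (Yt \<omega>) powr (p/2)) \<partial>M)"
  have GYm: "(\<lambda>y. ennreal (gram_det l y powr (p/2))) \<in> borel_measurable T"
    unfolding T_def by (rule Y_meas)
  have "(\<integral>\<^sup>+ \<omega>. ennreal (simplex_vol (k + l) (\<lambda>a. if a < k then X a \<omega> else Y (a - k) \<omega>) powr p) \<partial>M)
      = (\<integral>\<^sup>+ \<omega>. ennreal (1 / fact (k + l) powr p) * H (Xt \<omega>, Yt \<omega>) \<partial>M)"
  proof (rule nn_integral_cong)
    fix \<omega>
    have "gram_det (k + l) (\<lambda>a. if a < k then X a \<omega> else Y (a - k) \<omega>)
        = gram_det (k + l) (\<lambda>a. if a < k then Xt \<omega> a else Yt \<omega> (a - k))"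
      by (rule gram_det_cong) (auto simp: Xt_def Yt_def)
    moreover have "H (Xt \<omega>, Yt \<omega>) = ennreal (gram_det (k + l) (\<lambda>a. if a < k then Xt \<omega> a else Yt \<omega> (a - k)) powr (p/2))"
      unfolding H_def fst_conv snd_conv ..
    ultimately show "ennreal (simplex_vol (k + l) (\<lambda>a. if a < k then X a \<omega> else Y (a - k) \<omega>) powr p)
        = ennreal (1 / fact (k + l) powr p) * H (Xt \<omega>, Yt \<omega>)"
      unfolding sv_powr by (simp add: ennreal_mult'[symmetric])
  qed
  also have "\<dots> = ennreal (1 / fact (k + l) powr p) * (\<integral>\<^sup>+ \<omega>. H (Xt \<omega>, Yt \<omega>) \<partial>M)"
    by (rule nn_integral_cmult) (rule measurable_compose[OF XYm Hm])
  also have "(\<integral>\<^sup>+ \<omega>. H (Xt \<omega>, Yt \<omega>) \<partial>M) = (\<integral>\<^sup>+ z. H z \<partial>distr M (S \<Otimes>\<^sub>M T) (\<lambda>\<omega>. (Xt \<omega>, Yt \<omega>)))"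
    by (rule nn_integral_distr[symmetric]) (use XYm Hm in auto)
  also have "\<dots> = (\<integral>\<^sup>+ z. H z \<partial>(PiM {..<k} (\<lambda>_. gauss) \<Otimes>\<^sub>M PY))"
    by (simp add: joint[symmetric] dX PY_def)
  also have "\<dots> = (\<integral>\<^sup>+ y. (\<integral>\<^sup>+ x. H (x, y) \<partial>PiM {..<k} (\<lambda>_. gauss)) \<partial>PY)"
  proof -
    have pX: "prob_space (PiM {..<k} (\<lambda>_. gauss :: (real^'d) measure))"
      by (intro prob_space_PiM gauss_prob)
    have pY: "prob_space PY" unfolding PY_def by (rule M.prob_space_distr[OF rvY])
    interpret PP: pair_sigma_finite "PiM {..<k} (\<lambda>_. gauss :: (real^'d) measure)" PY
      by (rule pair_sigma_finite.intro; rule prob_space_imp_sigma_finite) (use pX pY in auto)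
    have sX: "sets (PiM {..<k} (\<lambda>_. gauss :: (real^'d) measure)) = sets S"
      unfolding S_def by (rule sets_PiM_cong) auto
    have sY: "sets PY = sets T" unfolding PY_def by simp
    have "H \<in> borel_measurable (PiM {..<k} (\<lambda>_. gauss) \<Otimes>\<^sub>M PY)"
      using Hm by (simp cong: measurable_cong_sets add: sets_pair_measure_cong[OF sX sY])
    then show ?thesis by (rule PP.nn_integral_snd[symmetric])
  qed
  also have "\<dots> = (\<integral>\<^sup>+ y. ennreal c * ennreal (gram_det l y powr (p/2)) \<partial>PY)"
  proof (rule nn_integral_cong)
    fix y :: "nat \<Rightarrow> real^'d"
    show "(\<integral>\<^sup>+ x. H (x, y) \<partial>PiM {..<k} (\<lambda>_. gauss)) = ennreal c * ennreal (gram_det l y powr (p/2))"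
      unfolding H_def c_def fst_conv snd_conv by (rule key[OF p0 assms(2)])
  qed
  also have "\<dots> = ennreal c * (\<integral>\<^sup>+ y. ennreal (gram_det l y powr (p/2)) \<partial>PY)"
    by (rule nn_integral_cmult) (simp add: PY_def GYm)
  also have "(\<integral>\<^sup>+ y. ennreal (gram_det l y powr (p/2)) \<partial>PY) = I"
    unfolding PY_def I_def by (rule nn_integral_distr) (use rvY GYm in auto)
  finally have LHS: "(\<integral>\<^sup>+ \<omega>. ennreal (simplex_vol (k + l) (\<lambda>a. if a < k then X a \<omega> else Y (a - k) \<omega>) powr p) \<partial>M)
      = ennreal (1 / fact (k + l) powr p) * (ennreal c * I)" .
  have "(\<integral>\<^sup>+ \<omega>. ennreal (simplex_vol l (\<lambda>a. Y a \<omega>) powr p) \<partial>M)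
      = (\<integral>\<^sup>+ \<omega>. ennreal (1 / fact l powr p) * ennreal (gram_det l (Yt \<omega>) powr (p/2)) \<partial>M)"
  proof (rule nn_integral_cong)
    fix \<omega>
    have "gram_det l (\<lambda>a. Y a \<omega>) = gram_det l (Yt \<omega>)"
      by (rule gram_det_cong) (auto simp: Yt_def)
    then show "ennreal (simplex_vol l (\<lambda>a. Y a \<omega>) powr p) = ennreal (1 / fact l powr p) * ennreal (gram_det l (Yt \<omega>) powr (p/2))"
      unfolding sv_powr by (simp add: ennreal_mult'[symmetric])
  qed
  also have "\<dots> = ennreal (1 / fact l powr p) * I"
    unfolding I_def by (rule nn_integral_cmult) (rule measurable_compose[OF rvY GYm])
  finally have RHS: "(\<integral>\<^sup>+ \<omega>. ennreal (simplex_vol l (\<lambda>a. Y a \<omega>) powr p) \<partial>M) = ennreal (1 / fact l powr p) * I" .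
  have ceq: "1 / fact (k + l) powr p * c
     = ((2 powr (real k / 2) * fact l) / fact (k + l)) powr p
         * (\<Prod>i\<in>{?d - l - k + 1..?d - l}. Gamma ((real i + p) / 2) / Gamma (real i / 2))
       * (1 / fact l powr p)"
    unfolding c_def by (rule const_eq[OF assms(2) p0])
  have c0: "c \<ge> 0" unfolding c_def using p0 assms(2) by (intro prod_nonneg chi_c_nonneg) auto
  have e1: "ennreal (1 / fact (k + l) powr p * c) = ennreal (1 / fact (k + l) powr p) * ennreal c"
    by (rule ennreal_mult''[OF c0])
  have "ennreal (1 / fact (k + l) powr p) * (ennreal c * I) = ennreal (1 / fact (k + l) powr p * c) * I"
    unfolding e1 by (simp only: mult.assoc)
  also have "\<dots> = ennreal (((2 powr (real k / 2) * fact l) / fact (k + l)) powr p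
         * (\<Prod>i\<in>{?d - l - k + 1..?d - l}. Gamma ((real i + p) / 2) / Gamma (real i / 2))) * (ennreal (1 / fact l powr p) * I)"
  proof -
    have "(0::real) \<le> 1 / fact l powr p" by simp
    note e2 = ennreal_mult''[OF this]
    show ?thesis unfolding ceq e2 by (simp only: mult.assoc)
  qed
  finally show ?thesis unfolding LHS RHS .
qed


end
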